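(* Let $n\in\{2,3\}$, let $D=\bigcup_{m=1}^{M}D_m\subset\mathbb{R}^n$ be a finite union of bounded domains with pairwise disjoint closures, let $k_{max}>0$, and let $g\in C(0,k_{max})$ be a given function with $g(k)\neq 0$ for all $k$ in an interval $I=(a,b)\subset(0,k_{max})$. Let $f\in L^2(\mathbb{R}^n)$ vanish outside $D$, let $F(y,k)=f(y)g(k)$, and define the far field pattern $$u^\infty(\theta,k)=\int_D e^{-ik\theta\cdot y}F(y,k)\,dy,\qquad \theta\in S^{n-1},\ k\in(0,k_{max}).$$ Fix an observation direction $\theta\in S^{n-1}$. Assume that the set $$\{\tau\in\mathbb{R}\,:\,\Pi_\tau\subset S_D(\theta),\ \hat f(\tau)=0\}$$ has Lebesgue measure zero. Then the strip $S_D(\theta)$ is uniquely determined by the far field data $u^\infty(\theta,k)$, $k\in I$ (at the single direction $\theta$); that is, if $D'$, $f'$ is a second pair satisfying the same hypotheses (with the same $g$ and $\theta$) and the corresponding far field patterns satisfy $u^\infty(\theta,k)=u'^\infty(\theta,k)$ for all $k\in I$, then $S_D(\theta)=S_{D'}(\theta)$.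
   Context: For $\tau\in\mathbb{R}$, $\Pi_\tau:=\{y\in\mathbb{R}^n: y\cdot\theta+\tau=0\}$ is the hyperplane with normal $\theta$, and $\hat f(\tau):=\int_{\Pi_\tau}f(y)\,ds(y)$. The $\theta$-strip hull of $D$ is $S_D(\theta):=\{y\in\mathbb{R}^n:\ \inf_{z\in D}z\cdot\theta\le y\cdot\theta\le\sup_{z\in D}z\cdot\theta\}$. *)

theory Defs
  imports "HOL-Analysis.Analysis"
begin

definition finite_union_domains :: "'a::euclidean_space set \<Rightarrow> bool" where
  "finite_union_domains D \<longleftrightarrow>
     (\<exists>\<D>. finite \<D> \<and> \<D> \<noteq> {} \<and>
        (\<forall>Dm\<in>\<D>. open Dm \<and> connected Dm \<and> bounded Dm \<and> Dm \<noteq> {}) \<and>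
        pairwise (\<lambda>A B. closure A \<inter> closure B = {}) \<D> \<and>
        D = \<Union>\<D>)"

definition hyperplane :: "'a::euclidean_space \<Rightarrow> real \<Rightarrow> 'a set" where
  "hyperplane \<theta> \<tau> = {y. y \<bullet> \<theta> + \<tau> = 0}"

definition perp_basis :: "'a::euclidean_space \<Rightarrow> nat \<Rightarrow> 'a" where
  "perp_basis \<theta> = (SOME e. \<forall>i<DIM('a) - 1. e i \<bullet> \<theta> = 0 \<and>
        (\<forall>j<DIM('a) - 1. e i \<bullet> e j = (if i = j then 1 else 0)))"

text \<open>Surface integral of f over the hyperplane Pi_tau, computed through the isometric
  parametrization t \<mapsto> -tau theta + sum_i t_i e_i of Pi_tau by R^(n-1)
  (Lebesgue measure on R^(n-1) = product of n-1 copies of lborel).\<close>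
definition hyperplane_integral ::
  "'a::euclidean_space \<Rightarrow> ('a \<Rightarrow> complex) \<Rightarrow> real \<Rightarrow> complex" where
  "hyperplane_integral \<theta> f \<tau> =
     (\<integral>t. f ((- \<tau>) *\<^sub>R \<theta> + (\<Sum>i<DIM('a) - 1. t i *\<^sub>R perp_basis \<theta> i))
        \<partial>(PiM {..<DIM('a) - 1} (\<lambda>_. lborel)))"

definition strip_hull :: "'a::euclidean_space set \<Rightarrow> 'a \<Rightarrow> 'a set" where
  "strip_hull D \<theta> = {y. (INF z\<in>D. z \<bullet> \<theta>) \<le> y \<bullet> \<theta> \<and> y \<bullet> \<theta> \<le> (SUP z\<in>D. z \<bullet> \<theta>)}"

definition far_field ::
  "'a::euclidean_space set \<Rightarrow> ('a \<Rightarrow> complex) \<Rightarrow> (real \<Rightarrow> complex) \<Rightarrow> 'a \<Rightarrow> real \<Rightarrow> complex" where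
  "far_field D f g \<theta> k =
     (LINT y:D|lebesgue. exp (- \<i> * complex_of_real (k * (\<theta> \<bullet> y))) * (f y * g k))"

definition admissible_pair :: "'a::euclidean_space set \<Rightarrow> ('a \<Rightarrow> complex) \<Rightarrow> 'a \<Rightarrow> bool" where
  "admissible_pair D f \<theta> \<longleftrightarrow>
     finite_union_domains D \<and>
     f \<in> borel_measurable lebesgue \<and>
     integrable lebesgue (\<lambda>y. (norm (f y))\<^sup>2) \<and>
     (\<forall>y. y \<notin> D \<longrightarrow> f y = 0) \<and>
     {\<tau>. hyperplane \<theta> \<tau> \<subseteq> strip_hull D \<theta> \<and> hyperplane_integral \<theta> f \<tau> = 0}
        \<in> null_sets lborel"

end

theory Submission
  imports Defs "HOL-Probability.Probability"
begin


lemma powser_coeffs_zero: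
  fixes c :: "nat \<Rightarrow> real" and F :: "real \<Rightarrow> real"
  assumes d: "\<delta> > 0" and S: "\<And>x. (\<lambda>m. c m * x^m) sums F x"
    and Z: "\<And>x. \<bar>x\<bar> < \<delta> \<Longrightarrow> F x = 0"
  shows "c m = 0"
proof (induction m rule: less_induct)
  case (less m)
  have sm: "(\<lambda>j. c (j+m) * x^j) sums (F x / x^m)" if "x \<noteq> 0" for x
  proof -
    have "(\<lambda>i. c (i+m) * x^(i+m)) sums (F x - (\<Sum>i<m. c i * x^i))"
      using S[of x] by (subst sums_iff_shift) simp
    moreover have "(\<Sum>i<m. c i * x^i) = 0" using less by simp
    ultimately have "(\<lambda>i. c (i+m) * x^(i+m)) sums F x" by simp
    hence "(\<lambda>j. c (j+m) * x^(j+m) / x^m) sums (F x / x^m)" by (rule sums_divide)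
    thus ?thesis using that by (simp add: power_add)
  qed
  have "((\<lambda>x. F x / x^m) \<longlongrightarrow> c (0+m)) (at 0)"
    by (rule powser_limit_0_strong[OF d, where a="\<lambda>j. c (j+m)"]) (use sm in auto)
  moreover have "((\<lambda>x. F x / x^m) \<longlongrightarrow> 0) (at 0)"
  proof (rule tendsto_eventually)
    show "\<forall>\<^sub>F x in at 0. F x / x ^ m = 0"
      unfolding eventually_at using d Z by (intro exI[of _ \<delta>]) auto
  qed
  ultimately show ?case using tendsto_unique by force
qed

lemma norm_exp_i_real [simp]: "norm (exp (\<i> * complex_of_real r)) = 1"
  by (metis exp_of_real mult.commute norm_exp_i_times)

lemma integrable_exp_mult:
  fixes w :: "real \<Rightarrow> complex"
  assumes w: "integrable lborel w"
  shows "integrable lborel (\<lambda>\<tau>. exp (\<i> * complex_of_real (k * \<tau>)) * w \<tau>)"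
proof (rule Bochner_Integration.integrable_bound[OF w])
  show "(\<lambda>\<tau>. exp (\<i> * complex_of_real (k * \<tau>)) * w \<tau>) \<in> borel_measurable lborel"
    using w by measurable
  show "AE x in lborel. norm (exp (\<i> * complex_of_real (k * x)) * w x) \<le> norm (w x)"
    by (simp add: norm_mult)
qed

lemma summable_exp_div: "summable (\<lambda>n. (x::real)^n / fact n)"
  using summable_exp[of x] by (simp add: divide_inverse mult.commute)

lemma fourier_powser:
  fixes w :: "real \<Rightarrow> complex"
  assumes w: "integrable lborel w" and supp: "\<And>\<tau>. \<bar>\<tau>\<bar> > R \<Longrightarrow> w \<tau> = 0" and R: "R \<ge> 0"
  shows "(\<lambda>m. (\<integral>\<tau>. ((\<i> * complex_of_real \<tau>)^m /\<^sub>R fact m) * (exp (\<i> * complex_of_real (k0*\<tau>)) * w \<tau>) \<partial>lborel) * complex_of_real s ^ m)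
           sums (\<integral>\<tau>. exp (\<i> * complex_of_real ((k0+s)*\<tau>)) * w \<tau> \<partial>lborel)"
proof -
  define f where "f m \<tau> = ((\<i> * complex_of_real (s*\<tau>))^m /\<^sub>R fact m) * (exp (\<i> * complex_of_real (k0*\<tau>)) * w \<tau>)" for m \<tau>
  have wm[measurable]: "w \<in> borel_measurable lborel" using w by simp
  have nfe: "norm (f m \<tau>) = (\<bar>s\<bar> * \<bar>\<tau>\<bar>)^m / fact m * norm (w \<tau>)" for m \<tau>
    by (simp add: f_def norm_mult norm_power abs_mult power_mult_distrib divide_inverse mult.commute)
  have nf: "norm (f m \<tau>) \<le> (\<bar>s\<bar> * R)^m / fact m * norm (w \<tau>)" for m \<tau>
  proof (cases "\<bar>\<tau>\<bar> > R")
    case True then show ?thesis using supp[OF True] R by (simp add: f_def)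
  next
    case False
    have "norm (f m \<tau>) = (\<bar>s\<bar> * \<bar>\<tau>\<bar>)^m / fact m * norm (w \<tau>)"
      by (simp add: f_def norm_mult norm_power abs_mult power_mult_distrib divide_inverse mult.commute)
    also have "\<dots> \<le> (\<bar>s\<bar> * R)^m / fact m * norm (w \<tau>)"
      using False by (intro mult_right_mono divide_right_mono power_mono mult_left_mono) auto
    finally show ?thesis .
  qed
  have intf: "integrable lborel (f m)" for m
  proof (rule Bochner_Integration.integrable_bound)
    show "integrable lborel (\<lambda>\<tau>. (\<bar>s\<bar> * R)^m / fact m * norm (w \<tau>))"
      using w by (intro integrable_mult_right integrable_norm)
    show "f m \<in> borel_measurable lborel" unfolding f_def by measurable
    show "AE x in lborel. norm (f m x) \<le> norm ((\<bar>s\<bar> * R)^m / fact m * norm (w x))"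
    proof (intro AE_I2)
      fix x show "norm (f m x) \<le> norm ((\<bar>s\<bar> * R)^m / fact m * norm (w x))"
        using nf[of m x] R by (simp add: abs_mult)
    qed
  qed
  have sumf: "summable (\<lambda>m. norm (f m \<tau>))" for \<tau>
  proof -
    have "summable (\<lambda>m. (\<bar>s\<bar> * \<bar>\<tau>\<bar>)^m / fact m * norm (w \<tau>))"
      by (intro summable_mult2 summable_exp_div)
    thus ?thesis by (simp only: nfe)
  qed
  have sumi: "summable (\<lambda>m. \<integral>\<tau>. norm (f m \<tau>) \<partial>lborel)"
  proof (rule summable_comparison_test')
    show "summable (\<lambda>m. (\<bar>s\<bar> * R)^m / fact m * (\<integral>\<tau>. norm (w \<tau>) \<partial>lborel))"
      by (intro summable_mult2 summable_exp_div)
    show "norm (\<integral>\<tau>. norm (f m \<tau>) \<partial>lborel) \<le> (\<bar>s\<bar> * R)^m / fact m * (\<integral>\<tau>. norm (w \<tau>) \<partial>lborel)" for m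
    proof -
      have "norm (\<integral>\<tau>. norm (f m \<tau>) \<partial>lborel) = (\<integral>\<tau>. norm (f m \<tau>) \<partial>lborel)"
        by simp
      also have "\<dots> \<le> (\<integral>\<tau>. (\<bar>s\<bar> * R)^m / fact m * norm (w \<tau>) \<partial>lborel)"
        using intf w nf by (intro integral_mono) auto
      also have "\<dots> = (\<bar>s\<bar> * R)^m / fact m * (\<integral>\<tau>. norm (w \<tau>) \<partial>lborel)" by simp
      finally show ?thesis .
    qed
  qed
  have "(\<lambda>m. integral\<^sup>L lborel (f m)) sums (\<integral>\<tau>. (\<Sum>m. f m \<tau>) \<partial>lborel)"
    by (rule sums_integral[OF intf]) (use sumf sumi in auto)
  moreover have "(\<Sum>m. f m \<tau>) = exp (\<i> * complex_of_real ((k0+s)*\<tau>)) * w \<tau>" for \<tau>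
  proof -
    have "(\<lambda>m. f m \<tau>) sums (exp (\<i> * complex_of_real (s*\<tau>)) * (exp (\<i> * complex_of_real (k0*\<tau>)) * w \<tau>))"
      unfolding f_def by (intro sums_mult2 exp_converges)
    moreover have "exp (\<i> * complex_of_real (s*\<tau>)) * (exp (\<i> * complex_of_real (k0*\<tau>)) * w \<tau>)
        = exp (\<i> * complex_of_real ((k0+s)*\<tau>)) * w \<tau>"
      by (simp add: exp_add[symmetric] algebra_simps)
    ultimately show ?thesis by (simp add: sums_iff)
  qed
  moreover have "integral\<^sup>L lborel (f m) = (\<integral>\<tau>. ((\<i> * complex_of_real \<tau>)^m /\<^sub>R fact m) * (exp (\<i> * complex_of_real (k0*\<tau>)) * w \<tau>) \<partial>lborel) * complex_of_real s ^ m" for m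
  proof -
    have "f m \<tau> = ((\<i> * complex_of_real \<tau>)^m /\<^sub>R fact m) * (exp (\<i> * complex_of_real (k0*\<tau>)) * w \<tau>) * complex_of_real s ^ m" for \<tau>
      by (simp add: f_def power_mult_distrib algebra_simps)
    hence "integral\<^sup>L lborel (f m) = (\<integral>\<tau>. ((\<i> * complex_of_real \<tau>)^m /\<^sub>R fact m) * (exp (\<i> * complex_of_real (k0*\<tau>)) * w \<tau>) * complex_of_real s ^ m \<partial>lborel)"
      by presburger
    also have "\<dots> = (\<integral>\<tau>. ((\<i> * complex_of_real \<tau>)^m /\<^sub>R fact m) * (exp (\<i> * complex_of_real (k0*\<tau>)) * w \<tau>) \<partial>lborel) * complex_of_real s ^ m"
      by (rule integral_mult_left_zero)
    finally show ?thesis .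
  qed
  ultimately show ?thesis by simp
qed

lemma fourier_zero_all:
  fixes w :: "real \<Rightarrow> complex"
  assumes w: "integrable lborel w" and supp: "\<And>\<tau>. \<bar>\<tau>\<bar> > R \<Longrightarrow> w \<tau> = 0" and R: "R \<ge> 0"
    and ab: "a < b"
    and Z: "\<And>k. k \<in> {a<..<b} \<Longrightarrow> (\<integral>\<tau>. exp (\<i> * complex_of_real (k*\<tau>)) * w \<tau> \<partial>lborel) = 0"
  shows "(\<integral>\<tau>. exp (\<i> * complex_of_real (k*\<tau>)) * w \<tau> \<partial>lborel) = 0"
proof -
  define k0 where "k0 = (a+b)/2"
  define \<delta> where "\<delta> = (b-a)/2"
  define \<phi> where "\<phi> k = (\<integral>\<tau>. exp (\<i> * complex_of_real (k*\<tau>)) * w \<tau> \<partial>lborel)" for k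
  define A where "A m = (\<integral>\<tau>. ((\<i> * complex_of_real \<tau>)^m /\<^sub>R fact m) * (exp (\<i> * complex_of_real (k0*\<tau>)) * w \<tau>) \<partial>lborel)" for m
  have S: "(\<lambda>m. A m * complex_of_real s ^ m) sums \<phi> (k0+s)" for s
    unfolding A_def \<phi>_def by (rule fourier_powser[OF w supp R])
  have d: "\<delta> > 0" using ab by (simp add: \<delta>_def)
  have Zs: "\<phi> (k0+s) = 0" if "\<bar>s\<bar> < \<delta>" for s
    unfolding \<phi>_def by (rule Z) (use that in \<open>auto simp: k0_def \<delta>_def abs_less_iff field_simps\<close>)
  have "Re (A m) = 0" for m
  proof (rule powser_coeffs_zero[OF d])
    show "(\<lambda>m. Re (A m) * x ^ m) sums Re (\<phi> (k0 + x))" for x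
      using sums_Re[OF S[of x]] by (simp flip: of_real_power)
    show "Re (\<phi> (k0 + x)) = 0" if "\<bar>x\<bar> < \<delta>" for x using Zs[OF that] by simp
  qed
  moreover have "Im (A m) = 0" for m
  proof (rule powser_coeffs_zero[OF d])
    show "(\<lambda>m. Im (A m) * x ^ m) sums Im (\<phi> (k0 + x))" for x
      using sums_Im[OF S[of x]] by (simp flip: of_real_power)
    show "Im (\<phi> (k0 + x)) = 0" if "\<bar>x\<bar> < \<delta>" for x using Zs[OF that] by simp
  qed
  ultimately have A0: "A m = 0" for m by (simp add: complex_eq_iff)
  have "(\<lambda>m. A m * complex_of_real (k - k0) ^ m) sums \<phi> (k0 + (k - k0))" by (rule S)
  hence "\<phi> k = 0" using A0 by (simp add: sums_iff)
  thus ?thesis by (simp add: \<phi>_def)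
qed

lemma fourier_real_zero:
  fixes v :: "real \<Rightarrow> real"
  assumes v: "integrable lborel v"
    and Z: "\<And>k. (\<integral>\<tau>. exp (\<i> * complex_of_real (k*\<tau>)) * complex_of_real (v \<tau>) \<partial>lborel) = 0"
  shows "AE \<tau> in lborel. v \<tau> = 0"
proof -
  define P where "P \<tau> = max (v \<tau>) 0" for \<tau>
  define N where "N \<tau> = max (- v \<tau>) 0" for \<tau>
  have vm[measurable]: "v \<in> borel_measurable lborel" using v by simp
  have Pm[measurable]: "P \<in> borel_measurable lborel" unfolding P_def by measurable
  have Nm[measurable]: "N \<in> borel_measurable lborel" unfolding N_def by measurable
  have iP: "integrable lborel P" unfolding P_def using v by (intro integrable_max) auto
  have iN: "integrable lborel N" unfolding N_def using v by (intro integrable_max) auto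
  have iPc: "integrable lborel (\<lambda>\<tau>. complex_of_real (P \<tau>))" using iP by (rule integrable_of_real)
  have iNc: "integrable lborel (\<lambda>\<tau>. complex_of_real (N \<tau>))" using iN by (rule integrable_of_real)
  have vPN: "v \<tau> = P \<tau> - N \<tau>" for \<tau> by (simp add: P_def N_def)
  have eqk: "(\<integral>\<tau>. exp (\<i> * complex_of_real (k*\<tau>)) * complex_of_real (P \<tau>) \<partial>lborel)
      = (\<integral>\<tau>. exp (\<i> * complex_of_real (k*\<tau>)) * complex_of_real (N \<tau>) \<partial>lborel)" for k
  proof -
    have "0 = (\<integral>\<tau>. exp (\<i> * complex_of_real (k*\<tau>)) * complex_of_real (P \<tau>)
                 - exp (\<i> * complex_of_real (k*\<tau>)) * complex_of_real (N \<tau>) \<partial>lborel)"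
      using Z[of k] by (simp add: vPN algebra_simps)
    also have "\<dots> = (\<integral>\<tau>. exp (\<i> * complex_of_real (k*\<tau>)) * complex_of_real (P \<tau>) \<partial>lborel)
                 - (\<integral>\<tau>. exp (\<i> * complex_of_real (k*\<tau>)) * complex_of_real (N \<tau>) \<partial>lborel)"
      by (intro Bochner_Integration.integral_diff integrable_exp_mult iPc iNc)
    finally show ?thesis by simp
  qed
  define c where "c = integral\<^sup>L lborel P"
  have cN: "c = integral\<^sup>L lborel N"
    using eqk[of 0] by (simp add: c_def)
  have c0: "c \<ge> 0" unfolding c_def by (rule integral_nonneg_AE) (simp add: P_def)
  have "AE \<tau> in lborel. P \<tau> = N \<tau>"
  proof (cases "c = 0")
    case True
    have "AE \<tau> in lborel. P \<tau> = 0"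
      using True iP by (subst integral_nonneg_eq_0_iff_AE[symmetric]) (auto simp: c_def P_def)
    moreover have "AE \<tau> in lborel. N \<tau> = 0"
      using True iN cN by (subst integral_nonneg_eq_0_iff_AE[symmetric]) (auto simp: N_def)
    ultimately show ?thesis by auto
  next
    case False
    hence cp: "c > 0" using c0 by simp
    define M1 where "M1 = density lborel (\<lambda>x. ennreal (P x / c))"
    define M2 where "M2 = density lborel (\<lambda>x. ennreal (N x / c))"
    have rd: "real_distribution (density lborel (\<lambda>x. ennreal (Q x / c)))"
      if Qm: "Q \<in> borel_measurable lborel" and iQ: "integrable lborel Q" and Q0: "\<And>x. Q x \<ge> 0"
        and Qc: "integral\<^sup>L lborel Q = c" for Q
    proof -
      have "emeasure (density lborel (\<lambda>x. ennreal (Q x / c))) UNIV = (\<integral>\<^sup>+x. ennreal (Q x / c) \<partial>lborel)"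
        using Qm by (simp add: emeasure_density)
      also have "\<dots> = ennreal (integral\<^sup>L lborel (\<lambda>x. Q x / c))"
        using iQ Q0 cp by (intro nn_integral_eq_integral) auto
      also have "\<dots> = 1" using Qc cp by simp
      finally show ?thesis
        unfolding real_distribution_def real_distribution_axioms_def
        by (auto intro!: prob_spaceI)
    qed
    have rd1: "real_distribution M1" unfolding M1_def
      by (rule rd[OF Pm iP]) (auto simp: P_def c_def)
    have rd2: "real_distribution M2" unfolding M2_def
      by (rule rd[OF Nm iN]) (auto simp: N_def cN)
    have chr: "char (density lborel (\<lambda>x. ennreal (Q x / c))) t
        = complex_of_real (1/c) * (\<integral>\<tau>. exp (\<i> * complex_of_real (t*\<tau>)) * complex_of_real (Q \<tau>) \<partial>lborel)"
      if Qm: "Q \<in> borel_measurable lborel" and Q0: "\<And>x. Q x \<ge> 0" for Q t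
    proof -
      have "char (density lborel (\<lambda>x. ennreal (Q x / c))) t
          = (\<integral>x. (Q x / c) *\<^sub>R exp (\<i> * complex_of_real (t*x)) \<partial>lborel)"
        unfolding char_def using Qm Q0 cp by (subst integral_density) auto
      also have "\<dots> = (\<integral>x. complex_of_real (1/c) * (exp (\<i> * complex_of_real (t*x)) * complex_of_real (Q x)) \<partial>lborel)"
        by (simp add: scaleR_conv_of_real mult.commute)
      also have "\<dots> = complex_of_real (1/c) * (\<integral>\<tau>. exp (\<i> * complex_of_real (t*\<tau>)) * complex_of_real (Q \<tau>) \<partial>lborel)"
        by (rule integral_mult_right_zero)
      finally show ?thesis .
    qed
    have "char M1 = char M2"
    proof
      fix t show "char M1 t = char M2 t"
      proof -
        have "char M1 t = complex_of_real (1/c) * (\<integral>\<tau>. exp (\<i> * complex_of_real (t*\<tau>)) * complex_of_real (P \<tau>) \<partial>lborel)"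
          unfolding M1_def by (rule chr[OF Pm]) (simp add: P_def)
        also have "\<dots> = complex_of_real (1/c) * (\<integral>\<tau>. exp (\<i> * complex_of_real (t*\<tau>)) * complex_of_real (N \<tau>) \<partial>lborel)"
          using eqk[of t] by simp
        also have "\<dots> = char M2 t"
          unfolding M2_def by (rule chr[OF Nm, symmetric]) (simp add: N_def)
        finally show ?thesis .
      qed
    qed
    hence "M1 = M2" by (rule Levy_uniqueness[OF rd1 rd2])
    hence "AE x in lborel. ennreal (P x / c) = ennreal (N x / c)"
      unfolding M1_def M2_def
    proof (subst (asm) finite_density_unique)
      have "(\<integral>\<^sup>+x. ennreal (P x / c) \<partial>lborel) = ennreal (integral\<^sup>L lborel (\<lambda>x. P x / c))"
        using iP cp by (intro nn_integral_eq_integral integrable_divide) (auto simp: P_def[symmetric], simp add: P_def)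
      thus "(\<integral>\<^sup>+x. ennreal (P x / c) \<partial>lborel) \<noteq> \<infinity>" by simp
    qed auto
    thus ?thesis
    proof (rule AE_mp, intro AE_I2 impI)
      fix x assume "ennreal (P x / c) = ennreal (N x / c)"
      hence "P x / c = N x / c" by (subst (asm) ennreal_inj) (use cp in \<open>auto simp: P_def N_def intro!: divide_nonneg_pos\<close>)
      thus "P x = N x" using cp by simp
    qed
  qed
  thus ?thesis
    by (rule AE_mp, intro AE_I2 impI) (auto simp: P_def N_def max_def split: if_splits)
qed

lemma re_cnj: "complex_of_real (Re z) = (z + cnj z) / 2"
  by (simp add: complex_add_cnj)
lemma im_cnj: "complex_of_real (Im z) = (z - cnj z) / (2*\<i>)"
  by (simp add: complex_eq_iff)

lemma fourier_unique:
  fixes w :: "real \<Rightarrow> complex"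
  assumes w: "integrable lborel w" and supp: "\<And>\<tau>. \<bar>\<tau>\<bar> > R \<Longrightarrow> w \<tau> = 0" and R: "R \<ge> 0"
    and ab: "a < b"
    and Z: "\<And>k. k \<in> {a<..<b} \<Longrightarrow> (\<integral>\<tau>. exp (\<i> * complex_of_real (k*\<tau>)) * w \<tau> \<partial>lborel) = 0"
  shows "AE \<tau> in lborel. w \<tau> = 0"
proof -
  have Zall: "(\<integral>\<tau>. exp (\<i> * complex_of_real (k*\<tau>)) * w \<tau> \<partial>lborel) = 0" for k
    by (rule fourier_zero_all[OF w supp R ab Z])
  have wc: "integrable lborel (\<lambda>\<tau>. cnj (w \<tau>))" using w by (rule integrable_cnj)
  have Zc: "(\<integral>\<tau>. exp (\<i> * complex_of_real (k*\<tau>)) * cnj (w \<tau>) \<partial>lborel) = 0" for k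
  proof -
    have "(\<integral>\<tau>. exp (\<i> * complex_of_real (k*\<tau>)) * cnj (w \<tau>) \<partial>lborel)
        = (\<integral>\<tau>. cnj (exp (\<i> * complex_of_real ((-k)*\<tau>)) * w \<tau>) \<partial>lborel)"
      by (simp add: exp_cnj)
    also have "\<dots> = cnj (\<integral>\<tau>. exp (\<i> * complex_of_real ((-k)*\<tau>)) * w \<tau> \<partial>lborel)"
      using Bochner_Integration.integral_cnj[of lborel "\<lambda>\<tau>. exp (\<i> * complex_of_real ((-k)*\<tau>)) * w \<tau>"] by simp
    also have "\<dots> = 0" using Zall[of "-k"] by simp
    finally show ?thesis .
  qed
  have "AE \<tau> in lborel. Re (w \<tau>) = 0"
  proof (rule fourier_real_zero)
    show "integrable lborel (\<lambda>\<tau>. Re (w \<tau>))" using w by (rule integrable_Re)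
    fix k
    have "(\<integral>\<tau>. exp (\<i> * complex_of_real (k*\<tau>)) * complex_of_real (Re (w \<tau>)) \<partial>lborel)
       = (\<integral>\<tau>. (exp (\<i> * complex_of_real (k*\<tau>)) * w \<tau> + exp (\<i> * complex_of_real (k*\<tau>)) * cnj (w \<tau>)) / 2 \<partial>lborel)"
      by (intro Bochner_Integration.integral_cong refl) (simp only: re_cnj, simp add: field_simps)
    also have "\<dots> = ((\<integral>\<tau>. exp (\<i> * complex_of_real (k*\<tau>)) * w \<tau> \<partial>lborel) + (\<integral>\<tau>. exp (\<i> * complex_of_real (k*\<tau>)) * cnj (w \<tau>) \<partial>lborel)) / 2"
      by (subst integral_divide_zero, subst Bochner_Integration.integral_add[OF integrable_exp_mult[OF w] integrable_exp_mult[OF wc]], rule refl)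
    also have "\<dots> = 0" using Zall Zc by simp
    finally show "(\<integral>\<tau>. exp (\<i> * complex_of_real (k*\<tau>)) * complex_of_real (Re (w \<tau>)) \<partial>lborel) = 0" .
  qed
  moreover have "AE \<tau> in lborel. Im (w \<tau>) = 0"
  proof (rule fourier_real_zero)
    show "integrable lborel (\<lambda>\<tau>. Im (w \<tau>))" using w by (rule integrable_Im)
    fix k
    have "(\<integral>\<tau>. exp (\<i> * complex_of_real (k*\<tau>)) * complex_of_real (Im (w \<tau>)) \<partial>lborel)
       = (\<integral>\<tau>. (exp (\<i> * complex_of_real (k*\<tau>)) * w \<tau> - exp (\<i> * complex_of_real (k*\<tau>)) * cnj (w \<tau>)) / (2*\<i>) \<partial>lborel)"
      by (intro Bochner_Integration.integral_cong refl) (simp only: im_cnj, simp add: field_simps)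
    also have "\<dots> = ((\<integral>\<tau>. exp (\<i> * complex_of_real (k*\<tau>)) * w \<tau> \<partial>lborel) - (\<integral>\<tau>. exp (\<i> * complex_of_real (k*\<tau>)) * cnj (w \<tau>) \<partial>lborel)) / (2*\<i>)"
      by (subst integral_divide_zero, subst Bochner_Integration.integral_diff[OF integrable_exp_mult[OF w] integrable_exp_mult[OF wc]], rule refl)
    also have "\<dots> = 0" using Zall Zc by simp
    finally show "(\<integral>\<tau>. exp (\<i> * complex_of_real (k*\<tau>)) * complex_of_real (Im (w \<tau>)) \<partial>lborel) = 0" .
  qed
  ultimately show ?thesis by eventually_elim (simp add: complex_eq_iff)
qed



lemma linear_borel_measurable:
  fixes f :: "'a::euclidean_space \<Rightarrow> 'b::euclidean_space"
  assumes "linear f" shows "f \<in> borel_measurable borel"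
  by (intro borel_measurable_continuous_onI linear_continuous_on) (use assms in \<open>simp add: linear_conv_bounded_linear\<close>)

lemma lborel_orthogonal_cart:
  fixes R :: "real^'n::{finite,wellorder} \<Rightarrow> real^'n::_"
  assumes R: "orthogonal_transformation R"
  shows "distr lborel borel R = lborel"
proof (rule lborel_eqI[symmetric])
  show "sets (distr lborel borel R) = sets borel" by simp
  fix l u :: "(real,'n) vec" assume lu: "\<And>b. b \<in> Basis \<Longrightarrow> l \<bullet> b \<le> u \<bullet> b"
  have lin: "linear R" using R by (rule orthogonal_transformation_linear)
  have Rm: "R \<in> borel_measurable borel" using lin by (rule linear_borel_measurable)
  define Ri where "Ri = inv R"
  have Ri: "orthogonal_transformation Ri" unfolding Ri_def using R by (rule orthogonal_transformation_inv)
  have bij: "bij R" using R by (rule orthogonal_transformation_bij)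
  have pre: "R -` box l u = Ri ` box l u"
    unfolding Ri_def using bij by (simp add: bij_vimage_eq_inv_image)
  have openpre: "open (R -` box l u)"
    using lin by (intro open_vimage) (auto simp: linear_continuous_on linear_conv_bounded_linear)
  have bnd: "bounded (R -` box l u)"
    unfolding pre using Ri by (intro bounded_linear_image) (auto simp: orthogonal_transformation_linear linear_conv_bounded_linear[symmetric])
  have "measure lborel (R -` box l u) = measure lebesgue (R -` box l u)"
    using openpre by (simp add: measure_completion)
  also have "\<dots> = measure lebesgue (box l u)"
    unfolding pre by (rule measure_orthogonal_image[OF Ri lmeasurable_box])
  also have "\<dots> = measure lborel (box l u)"
    by (simp add: measure_completion)
  finally have meq: "measure lborel (R -` box l u) = measure lborel (box l u)" .
  have "emeasure lborel (R -` box l u) = ennreal (measure lborel (R -` box l u))"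
    using emeasure_bounded_finite[OF bnd] by (intro emeasure_eq_ennreal_measure) simp
  also have "\<dots> = emeasure lborel (box l u)"
    unfolding meq using emeasure_lborel_box_finite[of l u] by (intro emeasure_eq_ennreal_measure[symmetric]) simp
  also have "\<dots> = (\<Prod>b\<in>Basis. (u - l) \<bullet> b)" using lu by (simp add: emeasure_lborel_box)
  finally show "emeasure (distr lborel borel R) (box l u) = (\<Prod>b\<in>Basis. (u - l) \<bullet> b)"
    using Rm by (simp add: emeasure_distr)
qed

lemma linear_MW: "linear (\<lambda>x::'b::euclidean_space. \<Sum>c\<in>Basis. (x \<bullet> c) *\<^sub>R (W c :: 'c::real_vector))"
  by (rule linearI) (simp_all add: inner_add_left scaleR_add_left sum.distrib scaleR_sum_right)

lemma inner_MW_W: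
  fixes W :: "'b::euclidean_space \<Rightarrow> 'c::real_inner"
  assumes orth: "\<And>b c. b \<in> Basis \<Longrightarrow> c \<in> Basis \<Longrightarrow> W b \<bullet> W c = (if b = c then 1 else 0)"
    and b: "b \<in> Basis"
  shows "(\<Sum>c\<in>Basis. (x \<bullet> c) *\<^sub>R W c) \<bullet> W b = x \<bullet> b"
proof -
  have "(\<Sum>c\<in>Basis. (x \<bullet> c) *\<^sub>R W c) \<bullet> W b = (\<Sum>c\<in>Basis. (x \<bullet> c) * (if c = b then 1 else 0))"
    by (simp add: inner_sum_left orth b)
  also have "\<dots> = x \<bullet> b" using b by (simp add: if_distrib sum.delta cong: if_cong)
  finally show ?thesis .
qed

lemma inner_MW:
  fixes W :: "'b::euclidean_space \<Rightarrow> 'c::real_inner"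
  assumes orth: "\<And>b c. b \<in> Basis \<Longrightarrow> c \<in> Basis \<Longrightarrow> W b \<bullet> W c = (if b = c then 1 else 0)"
  shows "(\<Sum>c\<in>Basis. (x \<bullet> c) *\<^sub>R W c) \<bullet> (\<Sum>c\<in>Basis. (y \<bullet> c) *\<^sub>R W c) = x \<bullet> y"
proof -
  have "(\<Sum>c\<in>Basis. (x \<bullet> c) *\<^sub>R W c) \<bullet> (\<Sum>c\<in>Basis. (y \<bullet> c) *\<^sub>R W c)
      = (\<Sum>c\<in>Basis. (y \<bullet> c) * ((\<Sum>c\<in>Basis. (x \<bullet> c) *\<^sub>R W c) \<bullet> W c))"
    by (simp add: inner_sum_right)
  also have "\<dots> = (\<Sum>c\<in>Basis. (y \<bullet> c) * (x \<bullet> c))"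
    by (intro sum.cong refl) (simp add: inner_MW_W[OF orth])
  also have "\<dots> = x \<bullet> y" by (simp only: euclidean_inner[of x y]) (rule sum.cong, auto)
  finally show ?thesis .
qed

lemma orthogonal_MW:
  fixes W :: "'a::euclidean_space \<Rightarrow> 'a"
  assumes orth: "\<And>b c. b \<in> Basis \<Longrightarrow> c \<in> Basis \<Longrightarrow> W b \<bullet> W c = (if b = c then 1 else 0)"
  shows "orthogonal_transformation (\<lambda>x. \<Sum>c\<in>Basis. (x \<bullet> c) *\<^sub>R W c)"
  unfolding orthogonal_transformation_def using linear_MW inner_MW[OF orth] by blast

lemma lborel_basis_iso:
  fixes \<delta> :: "'b::euclidean_space \<Rightarrow> 'a::euclidean_space"
  assumes bij: "bij_betw \<delta> Basis Basis"
  shows "distr lborel borel (\<lambda>x. \<Sum>c\<in>Basis. (x \<bullet> c) *\<^sub>R \<delta> c) = lborel"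
proof (rule lborel_eqI[symmetric])
  show "sets (distr lborel borel (\<lambda>x. \<Sum>c\<in>Basis. (x \<bullet> c) *\<^sub>R \<delta> c)) = sets borel" by simp
  define T where "T x = (\<Sum>c\<in>Basis. (x \<bullet> c) *\<^sub>R \<delta> c)" for x :: 'b
  have inj: "inj_on \<delta> Basis" and im: "\<delta> ` Basis = Basis" using bij by (auto simp: bij_betw_def)
  have orth: "\<And>b c. b \<in> Basis \<Longrightarrow> c \<in> Basis \<Longrightarrow> \<delta> b \<bullet> \<delta> c = (if b = c then 1 else 0)"
  proof -
    fix b c :: 'b assume b: "b \<in> Basis" and c: "c \<in> Basis"
    have "\<delta> b \<in> Basis" "\<delta> c \<in> Basis" using b c im by auto
    moreover have "\<delta> b = \<delta> c \<longleftrightarrow> b = c" using inj b c by (auto dest: inj_onD)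
    ultimately show "\<delta> b \<bullet> \<delta> c = (if b = c then 1 else 0)" by (simp add: inner_Basis)
  qed
  have Td: "T x \<bullet> \<delta> c = x \<bullet> c" if "c \<in> Basis" for x c
    unfolding T_def by (rule inner_MW_W[OF orth that])
  have Tm: "T \<in> borel_measurable borel" unfolding T_def by (rule linear_borel_measurable[OF linear_MW])
  fix l u :: 'a assume lu: "\<And>b. b \<in> Basis \<Longrightarrow> l \<bullet> b \<le> u \<bullet> b"
  define L :: 'b where "L = (\<Sum>c\<in>Basis. (l \<bullet> \<delta> c) *\<^sub>R c)"
  define U :: 'b where "U = (\<Sum>c\<in>Basis. (u \<bullet> \<delta> c) *\<^sub>R c)"
  have Lc: "L \<bullet> c = l \<bullet> \<delta> c" if "c \<in> Basis" for c
    unfolding L_def using that by (simp add: inner_sum_left inner_Basis if_distrib cong: if_cong)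
  have Uc: "U \<bullet> c = u \<bullet> \<delta> c" if "c \<in> Basis" for c
    unfolding U_def using that by (simp add: inner_sum_left inner_Basis if_distrib cong: if_cong)
  have ball: "(\<forall>b\<in>Basis. P b) \<longleftrightarrow> (\<forall>c\<in>Basis. P (\<delta> c))" for P
  proof -
    have "(\<forall>b\<in>\<delta> ` Basis. P b) \<longleftrightarrow> (\<forall>c\<in>Basis. P (\<delta> c))" by blast
    thus ?thesis unfolding im .
  qed
  have pre: "T -` box l u = box L U"
  proof -
    have "T x \<in> box l u \<longleftrightarrow> x \<in> box L U" for x
    proof -
      have "T x \<in> box l u \<longleftrightarrow> (\<forall>b\<in>Basis. l \<bullet> b < T x \<bullet> b \<and> T x \<bullet> b < u \<bullet> b)"
        by (simp add: mem_box)
      also have "\<dots> \<longleftrightarrow> (\<forall>c\<in>Basis. l \<bullet> \<delta> c < T x \<bullet> \<delta> c \<and> T x \<bullet> \<delta> c < u \<bullet> \<delta> c)"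
        by (rule ball)
      also have "\<dots> \<longleftrightarrow> (\<forall>c\<in>Basis. L \<bullet> c < x \<bullet> c \<and> x \<bullet> c < U \<bullet> c)"
        by (simp add: Td Lc Uc)
      also have "\<dots> \<longleftrightarrow> x \<in> box L U" by (simp add: mem_box)
      finally show ?thesis .
    qed
    thus ?thesis by auto
  qed
  have "emeasure lborel (box L U) = (\<Prod>c\<in>Basis. (U - L) \<bullet> c)"
    using lu im by (intro emeasure_lborel_box) (auto simp: Lc Uc)
  also have "(\<Prod>c\<in>Basis. (U - L) \<bullet> c) = (\<Prod>c\<in>Basis. (u - l) \<bullet> \<delta> c)"
    by (intro prod.cong refl) (simp add: inner_diff_left Lc Uc)
  also have "\<dots> = (\<Prod>b\<in>Basis. (u - l) \<bullet> b)"
    by (rule prod.reindex_bij_betw[OF bij])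
  finally show "emeasure (distr lborel borel (\<lambda>x. \<Sum>c\<in>Basis. (x \<bullet> c) *\<^sub>R \<delta> c)) (box l u) = (\<Prod>b\<in>Basis. (u - l) \<bullet> b)"
    using Tm pre by (simp add: emeasure_distr T_def[abs_def])
qed

lemma bij_basis_orth:
  fixes \<delta> :: "'b::euclidean_space \<Rightarrow> 'a::euclidean_space"
  assumes bij: "bij_betw \<delta> Basis Basis" and b: "b \<in> Basis" and c: "c \<in> Basis"
  shows "\<delta> b \<bullet> \<delta> c = (if b = c then 1 else 0)"
proof -
  have inj: "inj_on \<delta> Basis" and im: "\<delta> ` Basis = Basis" using bij by (auto simp: bij_betw_def)
  have "\<delta> b \<in> Basis" "\<delta> c \<in> Basis" using b c im by auto
  moreover have "\<delta> b = \<delta> c \<longleftrightarrow> b = c" using inj b c by (auto dest: inj_onD)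
  ultimately show ?thesis by (simp add: inner_Basis)
qed

lemma lborel_orthogonal_gen:
  fixes Q :: "'a::euclidean_space \<Rightarrow> 'a"
  assumes Q: "orthogonal_transformation Q" and card: "CARD('n::{finite,wellorder}) = DIM('a)"
  shows "distr lborel borel Q = lborel"
proof -
  have "card (Basis :: (real,'n) vec set) = card (Basis :: 'a set)" using card by simp
  then obtain \<delta> :: "(real,'n) vec \<Rightarrow> 'a" where bij: "bij_betw \<delta> Basis Basis"
    using finite_same_card_bij[of "Basis :: (real,'n) vec set" "Basis :: 'a set"] by auto
  define \<delta>i where "\<delta>i = inv_into Basis \<delta>"
  have biji: "bij_betw \<delta>i Basis Basis" unfolding \<delta>i_def using bij by (rule bij_betw_inv_into)
  have \<delta>i\<delta>: "\<delta>i (\<delta> c) = c" if "c \<in> Basis" for c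
    unfolding \<delta>i_def using bij that by (simp add: bij_betw_def)
  define T where "T x = (\<Sum>c\<in>Basis. (x \<bullet> c) *\<^sub>R \<delta> c)" for x :: "(real,'n) vec"
  define Ti where "Ti y = (\<Sum>b\<in>Basis. (y \<bullet> b) *\<^sub>R \<delta>i b)" for y :: 'a
  have orth: "\<And>b c. b \<in> Basis \<Longrightarrow> c \<in> Basis \<Longrightarrow> \<delta> b \<bullet> \<delta> c = (if b = c then 1 else 0)"
    by (rule bij_basis_orth[OF bij])
  have orthi: "\<And>b c. b \<in> Basis \<Longrightarrow> c \<in> Basis \<Longrightarrow> \<delta>i b \<bullet> \<delta>i c = (if b = c then 1 else 0)"
    by (rule bij_basis_orth[OF biji])
  have TTi: "T (Ti y) = y" for y
  proof (rule euclidean_eqI)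
    fix b :: 'a assume b: "b \<in> Basis"
    then obtain c where c: "c \<in> Basis" "b = \<delta> c" using bij by (auto simp: bij_betw_def)
    have "T (Ti y) \<bullet> b = Ti y \<bullet> c" unfolding T_def c(2) by (rule inner_MW_W[OF orth c(1)])
    also have "\<dots> = Ti y \<bullet> \<delta>i (\<delta> c)" using c by (simp add: \<delta>i\<delta>)
    also have "\<dots> = y \<bullet> \<delta> c" unfolding Ti_def
      by (rule inner_MW_W[OF orthi]) (use c bij in \<open>auto simp: bij_betw_def\<close>)
    finally show "T (Ti y) \<bullet> b = y \<bullet> b" using c by simp
  qed
  have linT: "linear T" unfolding T_def[abs_def] by (rule linear_MW)
  have linTi: "linear Ti" unfolding Ti_def[abs_def] by (rule linear_MW)
  have linQ: "linear Q" using Q by (rule orthogonal_transformation_linear)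
  define R where "R = Ti \<circ> Q \<circ> T"
  have R: "orthogonal_transformation R"
    unfolding orthogonal_transformation_def
  proof (intro conjI allI)
    show "linear R" unfolding R_def using linT linTi linQ by (intro linear_compose)
    fix v w
    have "R v \<bullet> R w = Q (T v) \<bullet> Q (T w)"
      unfolding R_def o_def Ti_def by (rule inner_MW[OF orthi])
    also have "\<dots> = T v \<bullet> T w" using Q by (simp add: orthogonal_transformation_def)
    also have "\<dots> = v \<bullet> w" unfolding T_def by (rule inner_MW[OF orth])
    finally show "R v \<bullet> R w = v \<bullet> w" .
  qed
  have QT: "Q \<circ> T = T \<circ> R" unfolding R_def by (auto simp: TTi)
  have Tm[measurable]: "T \<in> borel_measurable borel" using linT by (rule linear_borel_measurable)
  have Qm[measurable]: "Q \<in> borel_measurable borel" using linQ by (rule linear_borel_measurable)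
  have Rm[measurable]: "R \<in> borel_measurable borel"
    using R by (intro linear_borel_measurable orthogonal_transformation_linear)
  have lT: "distr lborel borel T = lborel"
    unfolding T_def[abs_def] by (rule lborel_basis_iso[OF bij])
  have "distr lborel borel Q = distr (distr lborel borel T) borel Q" by (simp add: lT)
  also have "\<dots> = distr lborel borel (Q \<circ> T)" by (subst distr_distr) auto
  also have "\<dots> = distr lborel borel (T \<circ> R)" by (simp add: QT)
  also have "\<dots> = distr (distr lborel borel R) borel T" by (subst distr_distr) auto
  also have "\<dots> = lborel" by (simp add: lborel_orthogonal_cart[OF R] lT)
  finally show ?thesis .
qed



lemma perp_basis_props:
  fixes \<theta> :: "'a::euclidean_space"
  assumes \<theta>: "norm \<theta> = 1"
  shows "\<forall>i<DIM('a) - 1. perp_basis \<theta> i \<bullet> \<theta> = 0 \<and>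
        (\<forall>j<DIM('a) - 1. perp_basis \<theta> i \<bullet> perp_basis \<theta> j = (if i = j then 1 else 0))"
proof -
  have "\<theta> \<noteq> 0" using \<theta> by auto
  obtain B where B: "B \<subseteq> {x. \<theta> \<bullet> x = 0}" "pairwise orthogonal B" "\<And>x. x \<in> B \<Longrightarrow> norm x = 1"
    "independent B" "card B = dim {x. \<theta> \<bullet> x = 0}" "span B = {x. \<theta> \<bullet> x = 0}"
    using orthonormal_basis_subspace[OF subspace_hyperplane] by blast
  have fin: "finite B" using B(4) by (rule independent_imp_finite)
  have cB: "card B = DIM('a) - 1" using B(5) dim_hyperplane[OF \<open>\<theta> \<noteq> 0\<close>] by simp
  obtain h where h: "bij_betw h {0..<card B} B" using ex_bij_betw_nat_finite[OF fin] by blast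
  have "\<exists>e. \<forall>i<DIM('a) - 1. e i \<bullet> \<theta> = 0 \<and> (\<forall>j<DIM('a) - 1. e i \<bullet> e j = (if i = j then 1 else 0))"
  proof (intro exI allI impI conjI)
    fix i assume i: "i < DIM('a) - 1"
    hence hi: "h i \<in> B" using h cB by (auto simp: bij_betw_def)
    thus "h i \<bullet> \<theta> = 0" using B(1) by (auto simp: inner_commute)
    fix j assume j: "j < DIM('a) - 1"
    hence hj: "h j \<in> B" using h cB by (auto simp: bij_betw_def)
    show "h i \<bullet> h j = (if i = j then 1 else 0)"
    proof (cases "i = j")
      case True
      have "norm (h i) = 1" using B(3) hi by blast
      hence "h i \<bullet> h i = 1" by (metis inner_commute norm_eq_1)
      thus ?thesis using True by simp
    next
      case False
      have "h i \<noteq> h j" using h i j cB False by (auto simp: bij_betw_def inj_on_def)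
      hence "orthogonal (h i) (h j)" using B(2) hi hj by (auto simp: pairwise_def)
      thus ?thesis using False by (simp add: orthogonal_def)
    qed
  qed
  thus ?thesis unfolding perp_basis_def by (rule someI_ex)
qed

lemma PiM_split_lborel:
  fixes b0 :: "'a::euclidean_space" and \<sigma> :: "nat \<Rightarrow> 'a"
  assumes b0: "b0 \<in> Basis" and \<sigma>: "bij_betw \<sigma> {..<m} (Basis - {b0})"
  defines "\<sigma>' \<equiv> inv_into {..<m} \<sigma>"
  defines "c \<equiv> (\<lambda>p::real \<times> (nat \<Rightarrow> real). \<lambda>b\<in>Basis. if b = b0 then fst p else snd p (\<sigma>' b))"
  shows "c \<in> measurable (lborel \<Otimes>\<^sub>M PiM {..<m} (\<lambda>_. lborel)) (PiM Basis (\<lambda>_. lborel))"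
    and "distr (lborel \<Otimes>\<^sub>M PiM {..<m} (\<lambda>_. lborel)) (PiM Basis (\<lambda>_. lborel)) c = PiM Basis (\<lambda>_. lborel)"
proof -
  interpret product_sigma_finite "\<lambda>_::'a. lborel :: real measure" by standard
  interpret P: finite_product_sigma_finite "\<lambda>_::nat. lborel :: real measure" "{..<m}" by standard auto
  have \<sigma>'bij: "bij_betw \<sigma>' (Basis - {b0}) {..<m}" unfolding \<sigma>'_def using \<sigma> by (rule bij_betw_inv_into)
  have \<sigma>'\<sigma>: "\<sigma>' (\<sigma> i) = i" if "i < m" for i unfolding \<sigma>'_def using \<sigma> that by (simp add: bij_betw_def)
  have \<sigma>\<sigma>': "\<sigma> (\<sigma>' b) = b" if "b \<in> Basis" "b \<noteq> b0" for b
    unfolding \<sigma>'_def using \<sigma> that by (simp add: bij_betw_def f_inv_into_f)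
  have \<sigma>'lt: "\<sigma>' b < m" if "b \<in> Basis" "b \<noteq> b0" for b using \<sigma>'bij that by (auto simp: bij_betw_def)
  have \<sigma>in: "\<sigma> i \<in> Basis" "\<sigma> i \<noteq> b0" if "i < m" for i using \<sigma> that by (auto simp: bij_betw_def)
  show cm: "c \<in> measurable (lborel \<Otimes>\<^sub>M PiM {..<m} (\<lambda>_. lborel)) (PiM Basis (\<lambda>_. lborel))"
    unfolding c_def
  proof (rule measurable_restrict)
    fix b :: 'a assume b: "b \<in> Basis"
    show "(\<lambda>p. if b = b0 then fst p else snd p (\<sigma>' b)) \<in> measurable (lborel \<Otimes>\<^sub>M PiM {..<m} (\<lambda>_. lborel)) lborel"
    proof (cases "b = b0")
      case True thus ?thesis by simp
    next
      case False
      have "(\<lambda>p. snd p (\<sigma>' b)) \<in> measurable (lborel \<Otimes>\<^sub>M PiM {..<m} (\<lambda>_. lborel)) lborel"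
        by (rule measurable_compose[OF measurable_snd measurable_component_singleton]) (use b False \<sigma>'lt in auto)
      thus ?thesis using False by simp
    qed
  qed
  show "distr (lborel \<Otimes>\<^sub>M PiM {..<m} (\<lambda>_. lborel)) (PiM Basis (\<lambda>_. lborel)) c = PiM Basis (\<lambda>_. lborel)"
  proof (rule PiM_eqI)
    show "finite (Basis :: 'a set)" by simp
    show "sets (distr (lborel \<Otimes>\<^sub>M PiM {..<m} (\<lambda>_. lborel)) (PiM Basis (\<lambda>_. lborel)) c) = sets (PiM Basis (\<lambda>_. lborel))"
      by simp
    fix A :: "'a \<Rightarrow> real set" assume A: "\<And>i. i \<in> Basis \<Longrightarrow> A i \<in> sets lborel"
    have pre: "c -` Pi\<^sub>E Basis A \<inter> space (lborel \<Otimes>\<^sub>M PiM {..<m} (\<lambda>_. lborel))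
        = A b0 \<times> Pi\<^sub>E {..<m} (\<lambda>i. A (\<sigma> i))"
    proof (intro set_eqI iffI)
      fix p assume p: "p \<in> c -` Pi\<^sub>E Basis A \<inter> space (lborel \<Otimes>\<^sub>M PiM {..<m} (\<lambda>_. lborel))"
      obtain \<tau> t where pt: "p = (\<tau>, t)" by (cases p)
      have t: "t \<in> Pi\<^sub>E {..<m} (\<lambda>_. UNIV)" using p pt by (simp add: space_pair_measure space_PiM)
      have cA: "\<And>b. b \<in> Basis \<Longrightarrow> c p b \<in> A b" using p by (auto simp: PiE_def Pi_def)
      have "\<tau> \<in> A b0" using cA[OF b0] by (simp add: c_def pt b0)
      moreover have "t \<in> Pi\<^sub>E {..<m} (\<lambda>i. A (\<sigma> i))"
      proof -
        have "t i \<in> A (\<sigma> i)" if "i < m" for i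
          using cA[OF \<sigma>in(1)[OF that]] \<sigma>in[OF that] by (simp add: c_def pt \<sigma>'\<sigma>[OF that])
        thus ?thesis using t by (auto simp: PiE_def Pi_def)
      qed
      ultimately show "p \<in> A b0 \<times> Pi\<^sub>E {..<m} (\<lambda>i. A (\<sigma> i))" by (simp add: pt)
    next
      fix p assume p: "p \<in> A b0 \<times> Pi\<^sub>E {..<m} (\<lambda>i. A (\<sigma> i))"
      obtain \<tau> t where pt: "p = (\<tau>, t)" by (cases p)
      have \<tau>: "\<tau> \<in> A b0" and t: "t \<in> Pi\<^sub>E {..<m} (\<lambda>i. A (\<sigma> i))" using p pt by auto
      have "c p \<in> Pi\<^sub>E Basis A"
      proof -
        have "c p b \<in> A b" if b: "b \<in> Basis" for b
        proof (cases "b = b0")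
          case True thus ?thesis using \<tau> b by (simp add: c_def pt)
        next
          case False
          have "t (\<sigma>' b) \<in> A (\<sigma> (\<sigma>' b))" using t \<sigma>'lt[OF b False] by (auto simp: PiE_def Pi_def)
          thus ?thesis using b False by (simp add: c_def pt \<sigma>\<sigma>')
        qed
        thus ?thesis by (auto simp: c_def PiE_def Pi_def)
      qed
      moreover have "p \<in> space (lborel \<Otimes>\<^sub>M PiM {..<m} (\<lambda>_. lborel))"
        using t by (auto simp: pt space_pair_measure space_PiM PiE_def Pi_def)
      ultimately show "p \<in> c -` Pi\<^sub>E Basis A \<inter> space (lborel \<Otimes>\<^sub>M PiM {..<m} (\<lambda>_. lborel))" by simp
    qed
    have Aset: "Pi\<^sub>E {..<m} (\<lambda>i. A (\<sigma> i)) \<in> sets (PiM {..<m} (\<lambda>_. lborel))"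
      using A \<sigma>in by (intro sets_PiM_I_finite) auto
    have "emeasure (distr (lborel \<Otimes>\<^sub>M PiM {..<m} (\<lambda>_. lborel)) (PiM Basis (\<lambda>_. lborel)) c) (Pi\<^sub>E Basis A)
        = emeasure (lborel \<Otimes>\<^sub>M PiM {..<m} (\<lambda>_. lborel)) (A b0 \<times> Pi\<^sub>E {..<m} (\<lambda>i. A (\<sigma> i)))"
      using A by (subst emeasure_distr[OF cm]) (auto intro!: sets_PiM_I_finite simp: pre)
    also have "\<dots> = emeasure lborel (A b0) * emeasure (PiM {..<m} (\<lambda>_. lborel)) (Pi\<^sub>E {..<m} (\<lambda>i. A (\<sigma> i)))"
      using A[OF b0] Aset by (intro P.emeasure_pair_measure_Times) auto
    also have "emeasure (PiM {..<m} (\<lambda>_. lborel)) (Pi\<^sub>E {..<m} (\<lambda>i. A (\<sigma> i))) = (\<Prod>i<m. emeasure lborel (A (\<sigma> i)))"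
      using A \<sigma>in by (intro P.emeasure_PiM) auto
    also have "(\<Prod>i<m. emeasure lborel (A (\<sigma> i))) = (\<Prod>b\<in>Basis - {b0}. emeasure lborel (A b))"
      by (rule prod.reindex_bij_betw[OF \<sigma>])
    also have "emeasure lborel (A b0) * (\<Prod>b\<in>Basis - {b0}. emeasure lborel (A b)) = (\<Prod>b\<in>Basis. emeasure lborel (A b))"
      using b0 by (simp add: prod.remove)
    finally show "emeasure (distr (lborel \<Otimes>\<^sub>M PiM {..<m} (\<lambda>_. lborel)) (PiM Basis (\<lambda>_. lborel)) c) (Pi\<^sub>E Basis A)
        = (\<Prod>b\<in>Basis. emeasure lborel (A b))" .
  qed
qed

lemma hyper_measure:
  fixes \<theta> :: "'a::euclidean_space"
  assumes \<theta>: "norm \<theta> = 1" and card: "CARD('n::{finite,wellorder}) = DIM('a)"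
  shows "distr (lborel \<Otimes>\<^sub>M PiM {..<DIM('a)-1} (\<lambda>_. lborel)) borel
           (\<lambda>p. (- fst p) *\<^sub>R \<theta> + (\<Sum>i<DIM('a)-1. snd p i *\<^sub>R perp_basis \<theta> i)) = lborel"
proof -
  define m where "m = DIM('a) - 1"
  define e where "e = perp_basis \<theta>"
  have e: "\<And>i. i < m \<Longrightarrow> e i \<bullet> \<theta> = 0" "\<And>i j. i < m \<Longrightarrow> j < m \<Longrightarrow> e i \<bullet> e j = (if i = j then 1 else 0)"
    using perp_basis_props[OF \<theta>] unfolding m_def e_def by auto
  obtain b0 :: 'a where b0: "b0 \<in> Basis" using nonempty_Basis by blast
  have fin: "finite (Basis - {b0} :: 'a set)" by simp
  have cardB: "card (Basis - {b0} :: 'a set) = m" using b0 by (simp add: m_def)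
  obtain \<sigma> where \<sigma>: "bij_betw \<sigma> {..<m} (Basis - {b0})"
    using ex_bij_betw_nat_finite[OF fin] cardB by (auto simp: atLeast0LessThan)
  define \<sigma>' where "\<sigma>' = inv_into {..<m} \<sigma>"
  have \<sigma>'bij: "bij_betw \<sigma>' (Basis - {b0}) {..<m}" unfolding \<sigma>'_def using \<sigma> by (rule bij_betw_inv_into)
  have \<sigma>'lt: "\<sigma>' b < m" if "b \<in> Basis" "b \<noteq> b0" for b using \<sigma>'bij that by (auto simp: bij_betw_def)
  have \<sigma>'inj: "\<sigma>' b = \<sigma>' c \<longleftrightarrow> b = c" if "b \<in> Basis" "b \<noteq> b0" "c \<in> Basis" "c \<noteq> b0" for b c
    using \<sigma>'bij that by (auto simp: bij_betw_def inj_on_def)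
  define W where "W b = (if b = b0 then - \<theta> else e (\<sigma>' b))" for b
  have \<theta>\<theta>: "\<theta> \<bullet> \<theta> = 1" using \<theta> by (simp add: norm_eq_1)
  have orth: "W b \<bullet> W c = (if b = c then 1 else 0)" if b: "b \<in> Basis" and c: "c \<in> Basis" for b c
  proof (cases "b = b0"; cases "c = b0")
    assume "b = b0" "c = b0" thus ?thesis by (simp add: W_def \<theta>\<theta>)
  next
    assume "b = b0" "c \<noteq> b0" thus ?thesis using e(1)[OF \<sigma>'lt[OF c]] by (simp add: W_def inner_commute)
  next
    assume "b \<noteq> b0" "c = b0" thus ?thesis using e(1)[OF \<sigma>'lt[OF b]] by (simp add: W_def)
  next
    assume "b \<noteq> b0" "c \<noteq> b0" thus ?thesis
      using e(2)[OF \<sigma>'lt[OF b] \<sigma>'lt[OF c]] \<sigma>'inj[OF b _ c] by (simp add: W_def)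
  qed
  define Q where "Q y = (\<Sum>b\<in>Basis. (y \<bullet> b) *\<^sub>R W b)" for y :: 'a
  have Qo: "orthogonal_transformation Q" unfolding Q_def[abs_def] by (rule orthogonal_MW[OF orth])
  have lQ: "distr lborel borel Q = lborel" by (rule lborel_orthogonal_gen[OF Qo card])
  have Qm[measurable]: "Q \<in> borel_measurable borel"
    using Qo by (intro linear_borel_measurable orthogonal_transformation_linear)
  define S where "S f = (\<Sum>b\<in>Basis. f b *\<^sub>R b)" for f :: "'a \<Rightarrow> real"
  have Sm[measurable]: "S \<in> borel_measurable (PiM Basis (\<lambda>_. lborel))"
    unfolding S_def[abs_def] by measurable
  have lS: "distr (PiM Basis (\<lambda>_. lborel)) borel S = lborel" unfolding S_def[abs_def] by (rule lborel_eq[symmetric])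
  define c where "c = (\<lambda>p::real \<times> (nat \<Rightarrow> real). \<lambda>b\<in>Basis. if b = b0 then fst p else snd p (\<sigma>' b))"
  have cm: "c \<in> measurable (lborel \<Otimes>\<^sub>M PiM {..<m} (\<lambda>_. lborel)) (PiM Basis (\<lambda>_. lborel))"
    and lc: "distr (lborel \<Otimes>\<^sub>M PiM {..<m} (\<lambda>_. lborel)) (PiM Basis (\<lambda>_. lborel)) c = PiM Basis (\<lambda>_. lborel)"
    unfolding c_def \<sigma>'_def using PiM_split_lborel[OF b0 \<sigma>] by auto
  have Phi: "(- fst p) *\<^sub>R \<theta> + (\<Sum>i<m. snd p i *\<^sub>R e i) = Q (S (c p))" for p
  proof -
    have Sc: "S (c p) \<bullet> b = c p b" if "b \<in> Basis" for b
      unfolding S_def using that by (simp add: inner_sum_left inner_Basis if_distrib cong: if_cong)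
    have "Q (S (c p)) = (\<Sum>b\<in>Basis. c p b *\<^sub>R W b)" unfolding Q_def by (intro sum.cong refl) (simp add: Sc)
    also have "\<dots> = c p b0 *\<^sub>R W b0 + (\<Sum>b\<in>Basis - {b0}. c p b *\<^sub>R W b)"
      using b0 by (simp add: sum.remove)
    also have "(\<Sum>b\<in>Basis - {b0}. c p b *\<^sub>R W b) = (\<Sum>b\<in>Basis - {b0}. snd p (\<sigma>' b) *\<^sub>R e (\<sigma>' b))"
      by (intro sum.cong refl) (auto simp: c_def W_def)
    also have "\<dots> = (\<Sum>i<m. snd p i *\<^sub>R e i)"
      by (rule sum.reindex_bij_betw[OF \<sigma>'bij])
    finally have X: "Q (S (c p)) = c p b0 *\<^sub>R W b0 + (\<Sum>i<m. snd p i *\<^sub>R e i)" .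
    moreover have "c p b0 = fst p" using b0 by (simp add: c_def)
    moreover have "W b0 = - \<theta>" by (simp add: W_def)
    ultimately show ?thesis by simp
  qed
  have "distr (lborel \<Otimes>\<^sub>M PiM {..<m} (\<lambda>_. lborel)) borel (\<lambda>p. (- fst p) *\<^sub>R \<theta> + (\<Sum>i<m. snd p i *\<^sub>R e i))
      = distr (lborel \<Otimes>\<^sub>M PiM {..<m} (\<lambda>_. lborel)) borel (Q \<circ> (S \<circ> c))"
    by (simp only: Phi o_def)
  also have "\<dots> = distr (distr (lborel \<Otimes>\<^sub>M PiM {..<m} (\<lambda>_. lborel)) borel (S \<circ> c)) borel Q"
    using cm by (subst distr_distr) auto
  also have "distr (lborel \<Otimes>\<^sub>M PiM {..<m} (\<lambda>_. lborel)) borel (S \<circ> c)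
      = distr (distr (lborel \<Otimes>\<^sub>M PiM {..<m} (\<lambda>_. lborel)) (PiM Basis (\<lambda>_. lborel)) c) borel S"
    using cm by (subst distr_distr) auto
  also have "\<dots> = lborel" by (simp add: lc lS)
  also have "distr lborel borel Q = lborel" by (rule lQ)
  finally show ?thesis unfolding m_def e_def .
qed



abbreviation PP :: "'a::euclidean_space itself \<Rightarrow> (nat \<Rightarrow> real) measure" where
  "PP _ \<equiv> PiM {..<DIM('a)-1} (\<lambda>_. lborel)"

definition Phi :: "'a::euclidean_space \<Rightarrow> real \<times> (nat \<Rightarrow> real) \<Rightarrow> 'a" where
  "Phi \<theta> p = (- fst p) *\<^sub>R \<theta> + (\<Sum>i<DIM('a)-1. snd p i *\<^sub>R perp_basis \<theta> i)"

lemma Phi_measurable: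
  "Phi \<theta> \<in> measurable (lborel \<Otimes>\<^sub>M PiM {..<DIM('a::euclidean_space)-1} (\<lambda>_. lborel)) (borel :: 'a measure)"
  unfolding Phi_def[abs_def]
proof (intro borel_measurable_add borel_measurable_scaleR borel_measurable_sum)
  fix i assume i: "i \<in> {..<DIM('a)-1}"
  have "(\<lambda>p. snd p i) \<in> measurable (lborel \<Otimes>\<^sub>M PiM {..<DIM('a)-1} (\<lambda>_. lborel)) lborel"
    by (rule measurable_compose[OF measurable_snd measurable_component_singleton]) (use i in auto)
  thus "(\<lambda>p. snd p i) \<in> borel_measurable (lborel \<Otimes>\<^sub>M PiM {..<DIM('a)-1} (\<lambda>_. lborel))"
    by (simp add: measurable_lborel2)
qed auto

lemma pair_sf: "pair_sigma_finite lborel (PiM {..<n::nat} (\<lambda>_. lborel :: real measure))"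
proof -
  interpret P: finite_product_sigma_finite "\<lambda>_::nat. lborel :: real measure" "{..<n}" by standard auto
  show ?thesis by (intro pair_sigma_finite.intro lborel.sigma_finite_measure_axioms P.sigma_finite_measure_axioms)
qed

lemma Phi_theta:
  assumes \<theta>: "norm \<theta> = 1" shows "Phi \<theta> p \<bullet> \<theta> = - fst p"
proof -
  have "(\<Sum>i<DIM('a)-1. snd p i *\<^sub>R perp_basis \<theta> i) \<bullet> \<theta> = (\<Sum>i<DIM('a)-1. snd p i * (perp_basis \<theta> i \<bullet> \<theta>))"
    by (simp add: inner_sum_left)
  also have "\<dots> = 0" using perp_basis_props[OF \<theta>] by (intro sum.neutral) auto
  finally show ?thesis using \<theta> by (simp add: Phi_def inner_add_left inner_diff_left norm_eq_1)
qed

lemma hyper_fubini: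
  fixes \<theta> :: "'a::euclidean_space" and F :: "'a \<Rightarrow> complex"
  assumes \<theta>: "norm \<theta> = 1" and card: "CARD('n::{finite,wellorder}) = DIM('a)"
    and Fm: "F \<in> borel_measurable borel" and F: "integrable lborel F"
  shows "integrable lborel (\<lambda>\<tau>. \<integral>t. F (Phi \<theta> (\<tau>, t)) \<partial>PiM {..<DIM('a)-1} (\<lambda>_. lborel))"
    and "integral\<^sup>L lborel F = (\<integral>\<tau>. (\<integral>t. F (Phi \<theta> (\<tau>, t)) \<partial>PiM {..<DIM('a)-1} (\<lambda>_. lborel)) \<partial>lborel)"
proof -
  interpret pair_sigma_finite lborel "PiM {..<DIM('a)-1} (\<lambda>_. lborel :: real measure)" by (rule pair_sf)
  have M: "distr (lborel \<Otimes>\<^sub>M PiM {..<DIM('a)-1} (\<lambda>_. lborel)) borel (Phi \<theta>) = lborel"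
    unfolding Phi_def[abs_def] by (rule hyper_measure[OF \<theta> card])
  have I: "integrable (lborel \<Otimes>\<^sub>M PiM {..<DIM('a)-1} (\<lambda>_. lborel)) (\<lambda>p. F (Phi \<theta> p))"
  proof -
    have "integrable (distr (lborel \<Otimes>\<^sub>M PiM {..<DIM('a)-1} (\<lambda>_. lborel)) borel (Phi \<theta>)) F"
      unfolding M by (rule F)
    thus ?thesis by (subst (asm) integrable_distr_eq[OF Phi_measurable Fm])
  qed
  show "integrable lborel (\<lambda>\<tau>. \<integral>t. F (Phi \<theta> (\<tau>, t)) \<partial>PiM {..<DIM('a)-1} (\<lambda>_. lborel))"
    using integrable_fst'[OF I] by simp
  have "integral\<^sup>L lborel F = (\<integral>p. F (Phi \<theta> p) \<partial>(lborel \<Otimes>\<^sub>M PiM {..<DIM('a)-1} (\<lambda>_. lborel)))"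
    by (subst M[symmetric], rule integral_distr[OF Phi_measurable Fm])
  also have "\<dots> = (\<integral>\<tau>. (\<integral>t. F (Phi \<theta> (\<tau>, t)) \<partial>PiM {..<DIM('a)-1} (\<lambda>_. lborel)) \<partial>lborel)"
    using integral_fst'[OF I] by simp
  finally show "integral\<^sup>L lborel F = (\<integral>\<tau>. (\<integral>t. F (Phi \<theta> (\<tau>, t)) \<partial>PiM {..<DIM('a)-1} (\<lambda>_. lborel)) \<partial>lborel)" .
qed

lemma hyper_AE:
  fixes \<theta> :: "'a::euclidean_space"
  assumes \<theta>: "norm \<theta> = 1" and card: "CARD('n::{finite,wellorder}) = DIM('a)"
    and N: "N \<in> null_sets (lborel :: 'a measure)"
  shows "AE \<tau> in lborel. AE t in PiM {..<DIM('a)-1} (\<lambda>_. lborel). Phi \<theta> (\<tau>, t) \<notin> N"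
proof -
  interpret pair_sigma_finite lborel "PiM {..<DIM('a)-1} (\<lambda>_. lborel :: real measure)" by (rule pair_sf)
  have M: "distr (lborel \<Otimes>\<^sub>M PiM {..<DIM('a)-1} (\<lambda>_. lborel)) borel (Phi \<theta>) = lborel"
    unfolding Phi_def[abs_def] by (rule hyper_measure[OF \<theta> card])
  have "AE y in (lborel :: 'a measure). y \<notin> N" using N by (rule AE_not_in)
  hence "AE y in distr (lborel \<Otimes>\<^sub>M PiM {..<DIM('a)-1} (\<lambda>_. lborel)) borel (Phi \<theta>). y \<notin> N"
    unfolding M .
  hence "AE p in lborel \<Otimes>\<^sub>M PiM {..<DIM('a)-1} (\<lambda>_. lborel). Phi \<theta> p \<notin> N"
    using N by (subst (asm) AE_distr_iff[OF Phi_measurable]) auto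
  thus ?thesis by (rule AE_pair)
qed

lemma domain_props:
  assumes "finite_union_domains D"
  shows "open D" "bounded D" "D \<noteq> {}"
proof -
  obtain \<D> where \<D>: "finite \<D>" "\<D> \<noteq> {}" "\<forall>Dm\<in>\<D>. open Dm \<and> connected Dm \<and> bounded Dm \<and> Dm \<noteq> {}"
    "D = \<Union>\<D>"
    using assms unfolding finite_union_domains_def by blast
  show "open D" using \<D> by auto
  show "bounded D" using \<D> by (auto intro: bounded_Union)
  show "D \<noteq> {}" using \<D> by auto
qed

lemma t_le_1_t2: "(t::real) \<le> 1 + t\<^sup>2"
proof -
  have "0 \<le> (t - 1/2)\<^sup>2 + 3/4" by simp
  thus ?thesis by (simp add: power2_eq_square algebra_simps)
qed

lemma strip_props:
  fixes D :: "'a::euclidean_space set"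
  assumes "open D" "bounded D" "D \<noteq> {}" and \<theta>: "norm \<theta> = 1"
  shows "\<And>z. z \<in> D \<Longrightarrow> (INF z\<in>D. z \<bullet> \<theta>) \<le> z \<bullet> \<theta> \<and> z \<bullet> \<theta> \<le> (SUP z\<in>D. z \<bullet> \<theta>)"
    and "(INF z\<in>D. z \<bullet> \<theta>) < (SUP z\<in>D. z \<bullet> \<theta>)"
proof -
  obtain B where B: "\<And>z. z \<in> D \<Longrightarrow> norm z \<le> B" using assms(2) by (auto simp: bounded_iff)
  have bz: "\<bar>z \<bullet> \<theta>\<bar> \<le> B" if "z \<in> D" for z
    using Cauchy_Schwarz_ineq2[of z \<theta>] B[OF that] \<theta> by simp
  have bb: "bdd_below ((\<lambda>z. z \<bullet> \<theta>) ` D)" using bz by (intro bdd_belowI[of _ "-B"]) (force simp: abs_le_iff)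
  have ba: "bdd_above ((\<lambda>z. z \<bullet> \<theta>) ` D)" using bz by (intro bdd_aboveI[of _ "B"]) (auto simp: abs_le_iff)
  show inD: "(INF z\<in>D. z \<bullet> \<theta>) \<le> z \<bullet> \<theta> \<and> z \<bullet> \<theta> \<le> (SUP z\<in>D. z \<bullet> \<theta>)" if "z \<in> D" for z
    using cINF_lower[OF bb that] cSUP_upper[OF that ba] by simp
  obtain z where z: "z \<in> D" using assms(3) by blast
  obtain \<epsilon> where \<epsilon>: "\<epsilon> > 0" "ball z \<epsilon> \<subseteq> D" using assms(1) z by (meson open_contains_ball)
  have "z + (\<epsilon>/2) *\<^sub>R \<theta> \<in> D" "z - (\<epsilon>/2) *\<^sub>R \<theta> \<in> D"
    using \<epsilon> \<theta> by (auto intro!: subsetD[OF \<epsilon>(2)] simp: dist_norm)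
  from inD[OF this(1)] inD[OF this(2)] \<theta> \<epsilon>(1)
  show "(INF z\<in>D. z \<bullet> \<theta>) < (SUP z\<in>D. z \<bullet> \<theta>)"
    by (simp add: inner_add_left inner_diff_left norm_eq_1)
qed

lemma admissible_analysis:
  fixes D :: "'a::euclidean_space set" and f :: "'a \<Rightarrow> complex" and \<theta> :: 'a and g :: "real \<Rightarrow> complex"
  assumes \<theta>: "norm \<theta> = 1" and card: "CARD('n::{finite,wellorder}) = DIM('a)"
    and adm: "admissible_pair D f \<theta>"
  obtains u where "integrable lborel u"
    "\<And>\<tau>. \<not> ((INF z\<in>D. z \<bullet> \<theta>) \<le> -\<tau> \<and> -\<tau> \<le> (SUP z\<in>D. z \<bullet> \<theta>)) \<Longrightarrow> u \<tau> = 0"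
    "AE \<tau> in lborel. ((INF z\<in>D. z \<bullet> \<theta>) \<le> -\<tau> \<and> -\<tau> \<le> (SUP z\<in>D. z \<bullet> \<theta>)) \<longrightarrow> u \<tau> \<noteq> 0"
    "\<And>k. far_field D f g \<theta> k = g k * (\<integral>\<tau>. exp (\<i> * complex_of_real (k*\<tau>)) * u \<tau> \<partial>lborel)"
    "(INF z\<in>D. z \<bullet> \<theta>) < (SUP z\<in>D. z \<bullet> \<theta>)"
proof -
  define \<alpha> where "\<alpha> = (INF z\<in>D. z \<bullet> \<theta>)"
  define \<beta> where "\<beta> = (SUP z\<in>D. z \<bullet> \<theta>)"
  have fud: "finite_union_domains D" and fm[measurable]: "f \<in> borel_measurable lebesgue"
    and f2: "integrable lebesgue (\<lambda>y. (norm (f y))\<^sup>2)" and fz: "\<And>y. y \<notin> D \<Longrightarrow> f y = 0"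
    and hyp: "{\<tau>. hyperplane \<theta> \<tau> \<subseteq> strip_hull D \<theta> \<and> hyperplane_integral \<theta> f \<tau> = 0} \<in> null_sets lborel"
    using adm unfolding admissible_pair_def by auto
  note dp = domain_props[OF fud]
  have Dm[measurable]: "D \<in> sets borel" using dp(1) by simp
  have inD: "\<And>z. z \<in> D \<Longrightarrow> \<alpha> \<le> z \<bullet> \<theta> \<and> z \<bullet> \<theta> \<le> \<beta>" and ab: "\<alpha> < \<beta>"
    unfolding \<alpha>_def \<beta>_def using strip_props[OF dp \<theta>] by auto
  obtain g1 where g1m[measurable]: "g1 \<in> borel_measurable lborel" and g1: "AE x in lborel. Re (f x) = g1 x"
    using completion_ex_borel_measurable_real[of "\<lambda>x. Re (f x)" lborel] fm by auto
  obtain g2 where g2m[measurable]: "g2 \<in> borel_measurable lborel" and g2: "AE x in lborel. Im (f x) = g2 x"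
    using completion_ex_borel_measurable_real[of "\<lambda>x. Im (f x)" lborel] fm by auto
  define f1 where "f1 x = complex_of_real (g1 x) + \<i> * complex_of_real (g2 x)" for x
  have f1m[measurable]: "f1 \<in> borel_measurable lborel" unfolding f1_def by measurable
  have ff1: "AE x in lborel. f x = f1 x" using g1 g2 by eventually_elim (simp add: f1_def complex_eq_iff)
  define f0 where "f0 y = (if y \<in> D then f1 y else 0)" for y
  have f1b[measurable]: "f1 \<in> borel_measurable borel" using f1m by simp
  have f0m[measurable]: "f0 \<in> borel_measurable borel" unfolding f0_def by measurable
  have ff0: "AE y in lborel. f y = f0 y" using ff1 by eventually_elim (auto simp: f0_def fz)
  obtain N where N: "N \<in> null_sets lborel" "{y \<in> space lborel. \<not> f y = f0 y} \<subseteq> N"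
    by (rule AE_E[OF ff0]) blast
  have f0z: "f0 y = 0" if "y \<notin> D" for y using that by (simp add: f0_def)
  have "integrable lebesgue (\<lambda>y. (norm (f0 y))\<^sup>2)"
  proof (rule integrable_cong_AE[THEN iffD1, OF _ _ _ f2])
    show "(\<lambda>y. (norm (f y))\<^sup>2) \<in> borel_measurable lebesgue" by measurable
    show "(\<lambda>y. (norm (f0 y))\<^sup>2) \<in> borel_measurable lebesgue"
      using f0m by (simp add: measurable_completion)
    show "AE y in lebesgue. (norm (f y))\<^sup>2 = (norm (f0 y))\<^sup>2"
      using AE_completion[OF ff0] by eventually_elim simp
  qed
  hence f02: "integrable lborel (\<lambda>y. (norm (f0 y))\<^sup>2)"
    by (subst (asm) integrable_completion) (use f0m in auto)
  have iD: "integrable lborel (indicat_real D)"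
    using emeasure_bounded_finite[OF dp(2)] by (intro integrable_real_indicator) auto
  have f0i: "integrable lborel f0"
  proof (rule Bochner_Integration.integrable_bound[OF Bochner_Integration.integrable_add[OF iD f02]])
    show "f0 \<in> borel_measurable lborel" using f0m by simp
    show "AE y in lborel. norm (f0 y) \<le> norm (indicat_real D y + (norm (f0 y))\<^sup>2)"
    proof (intro AE_I2)
      fix y show "norm (f0 y) \<le> norm (indicat_real D y + (norm (f0 y))\<^sup>2)"
        using t_le_1_t2[of "norm (f0 y)"] by (cases "y \<in> D") (auto simp: f0z)
    qed
  qed
  define u where "u \<tau> = (\<integral>t. f0 (Phi \<theta> (\<tau>, t)) \<partial>PiM {..<DIM('a)-1} (\<lambda>_. lborel))" for \<tau>
  have ui: "integrable lborel u" unfolding u_def[abs_def] by (rule hyper_fubini(1)[OF \<theta> card f0m f0i])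
  have uz: "u \<tau> = 0" if "\<not> (\<alpha> \<le> -\<tau> \<and> -\<tau> \<le> \<beta>)" for \<tau>
  proof -
    have "Phi \<theta> (\<tau>, t) \<notin> D" for t using inD[of "Phi \<theta> (\<tau>, t)"] Phi_theta[OF \<theta>] that by auto
    thus ?thesis by (simp add: u_def f0z)
  qed
  have ff: "far_field D f g \<theta> k = g k * (\<integral>\<tau>. exp (\<i> * complex_of_real (k*\<tau>)) * u \<tau> \<partial>lborel)" for k
  proof -
    define F where "F y = exp (- \<i> * complex_of_real (k * (\<theta> \<bullet> y))) * f0 y" for y
    have Fm[measurable]: "F \<in> borel_measurable borel" unfolding F_def by measurable
    have Fi: "integrable lborel F"
    proof (rule Bochner_Integration.integrable_bound[OF f0i])
      show "F \<in> borel_measurable lborel" using Fm by simp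
      show "AE x in lborel. norm (F x) \<le> norm (f0 x)"
        by (intro AE_I2) (simp add: F_def norm_mult)
    qed
    have "far_field D f g \<theta> k = (\<integral>y. indicat_real D y *\<^sub>R (exp (- \<i> * complex_of_real (k * (\<theta> \<bullet> y))) * (f y * g k)) \<partial>lebesgue)"
      by (simp add: far_field_def set_lebesgue_integral_def)
    also have "\<dots> = (\<integral>y. g k * F y \<partial>lebesgue)"
    proof (rule integral_cong_AE)
      have E: "(\<lambda>y. exp (- \<i> * complex_of_real (k * (\<theta> \<bullet> y)))) \<in> borel_measurable lebesgue"
        by (rule measurable_completion) measurable
      have I: "indicat_real D \<in> borel_measurable lebesgue"
        by (rule measurable_completion) measurable
      show "(\<lambda>y. indicat_real D y *\<^sub>R (exp (- \<i> * complex_of_real (k * (\<theta> \<bullet> y))) * (f y * g k))) \<in> borel_measurable lebesgue"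
        by (intro borel_measurable_scaleR borel_measurable_times E I fm borel_measurable_const)
      show "(\<lambda>y. g k * F y) \<in> borel_measurable lebesgue"
        using Fm by (simp add: measurable_completion)
      show "AE y in lebesgue. indicat_real D y *\<^sub>R (exp (- \<i> * complex_of_real (k * (\<theta> \<bullet> y))) * (f y * g k)) = g k * F y"
        using AE_completion[OF ff0] by eventually_elim (auto simp: F_def f0z indicator_def)
    qed
    also have "\<dots> = (\<integral>y. g k * F y \<partial>lborel)"
      by (rule integral_completion) (use Fm in simp)
    also have "\<dots> = g k * integral\<^sup>L lborel F" by (rule integral_mult_right_zero)
    also have "integral\<^sup>L lborel F = (\<integral>\<tau>. (\<integral>t. F (Phi \<theta> (\<tau>, t)) \<partial>PiM {..<DIM('a)-1} (\<lambda>_. lborel)) \<partial>lborel)"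
      by (rule hyper_fubini(2)[OF \<theta> card Fm Fi])
    also have "\<dots> = (\<integral>\<tau>. exp (\<i> * complex_of_real (k*\<tau>)) * u \<tau> \<partial>lborel)"
    proof (intro Bochner_Integration.integral_cong refl)
      fix \<tau>
      have "F (Phi \<theta> (\<tau>, t)) = exp (\<i> * complex_of_real (k*\<tau>)) * f0 (Phi \<theta> (\<tau>, t))" for t
        using Phi_theta[OF \<theta>, of "(\<tau>, t)"] by (simp add: F_def inner_commute)
      hence "(\<integral>t. F (Phi \<theta> (\<tau>, t)) \<partial>PiM {..<DIM('a)-1} (\<lambda>_. lborel))
          = (\<integral>t. exp (\<i> * complex_of_real (k*\<tau>)) * f0 (Phi \<theta> (\<tau>, t)) \<partial>PiM {..<DIM('a)-1} (\<lambda>_. lborel))"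
        by simp
      also have "\<dots> = exp (\<i> * complex_of_real (k*\<tau>)) * u \<tau>"
        unfolding u_def by (rule integral_mult_right_zero)
      finally show "(\<integral>t. F (Phi \<theta> (\<tau>, t)) \<partial>PiM {..<DIM('a)-1} (\<lambda>_. lborel)) = exp (\<i> * complex_of_real (k*\<tau>)) * u \<tau>" .
    qed
    finally show ?thesis .
  qed
  have nz: "AE \<tau> in lborel. (\<alpha> \<le> -\<tau> \<and> -\<tau> \<le> \<beta>) \<longrightarrow> u \<tau> \<noteq> 0"
  proof -
    have "AE \<tau> in lborel. \<tau> \<notin> {\<tau>. hyperplane \<theta> \<tau> \<subseteq> strip_hull D \<theta> \<and> hyperplane_integral \<theta> f \<tau> = 0}"
      using hyp by (rule AE_not_in)
    moreover have "AE \<tau> in lborel. AE t in PiM {..<DIM('a)-1} (\<lambda>_. lborel). Phi \<theta> (\<tau>, t) \<notin> N"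
      by (rule hyper_AE[OF \<theta> card N(1)])
    ultimately show ?thesis
    proof eventually_elim
      case (elim \<tau>)
      show ?case
      proof
        assume r: "\<alpha> \<le> -\<tau> \<and> -\<tau> \<le> \<beta>"
        have "hyperplane \<theta> \<tau> \<subseteq> strip_hull D \<theta>"
        proof
          fix y assume "y \<in> hyperplane \<theta> \<tau>"
          hence "y \<bullet> \<theta> = -\<tau>" by (simp add: hyperplane_def)
          thus "y \<in> strip_hull D \<theta>" using r by (simp add: strip_hull_def \<alpha>_def \<beta>_def)
        qed
        hence hz: "hyperplane_integral \<theta> f \<tau> \<noteq> 0" using elim(1) by auto
        have heq: "hyperplane_integral \<theta> f \<tau> = (\<integral>t. f (Phi \<theta> (\<tau>, t)) \<partial>PiM {..<DIM('a)-1} (\<lambda>_. lborel))"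
          by (simp add: hyperplane_integral_def Phi_def)
        have int: "integrable (PiM {..<DIM('a)-1} (\<lambda>_. lborel)) (\<lambda>t. f (Phi \<theta> (\<tau>, t)))"
          using hz heq not_integrable_integral_eq by fastforce
        have pm: "(\<lambda>t. Phi \<theta> (\<tau>, t)) \<in> measurable (PiM {..<DIM('a)-1} (\<lambda>_. lborel)) borel"
        proof -
          have "(\<lambda>t. (\<tau>, t)) \<in> measurable (PiM {..<DIM('a)-1} (\<lambda>_. lborel)) (lborel \<Otimes>\<^sub>M PiM {..<DIM('a)-1} (\<lambda>_. lborel))"
            by (rule measurable_Pair2[where ?M1.0=lborel]) simp_all
          thus ?thesis by (rule measurable_compose[OF _ Phi_measurable])
        qed
        have "(\<integral>t. f (Phi \<theta> (\<tau>, t)) \<partial>PiM {..<DIM('a)-1} (\<lambda>_. lborel)) = u \<tau>"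
          unfolding u_def
        proof (rule integral_cong_AE)
          show "(\<lambda>t. f (Phi \<theta> (\<tau>, t))) \<in> borel_measurable (PiM {..<DIM('a)-1} (\<lambda>_. lborel))"
            using int by simp
          show "(\<lambda>t. f0 (Phi \<theta> (\<tau>, t))) \<in> borel_measurable (PiM {..<DIM('a)-1} (\<lambda>_. lborel))"
            by (rule measurable_compose[OF pm f0m])
          show "AE t in PiM {..<DIM('a)-1} (\<lambda>_. lborel). f (Phi \<theta> (\<tau>, t)) = f0 (Phi \<theta> (\<tau>, t))"
            using elim(2) by eventually_elim (use N(2) in auto)
        qed
        thus "u \<tau> \<noteq> 0" using hz heq by simp
      qed
    qed
  qed
  show ?thesis
    using that[OF ui uz[unfolded \<alpha>_def \<beta>_def] nz[unfolded \<alpha>_def \<beta>_def] ff ab[unfolded \<alpha>_def \<beta>_def]] .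
qed



lemma ae_not_interval:
  fixes a b :: real
  assumes "AE x in lborel. x \<notin> {a<..<b}"
  shows "b \<le> a"
proof (rule ccontr)
  assume "\<not> b \<le> a"
  hence "emeasure lborel {a<..<b} = ennreal (b - a)" by simp
  moreover have "emeasure lborel {a<..<b} = 0"
    using assms by (subst (asm) AE_iff_measurable[of "{a<..<b}"]) auto
  ultimately show False using \<open>\<not> b \<le> a\<close> by simp
qed

lemma strip_endpoint:
  fixes u u' :: "real \<Rightarrow> complex"
  assumes eq: "AE \<tau> in lborel. u \<tau> = u' \<tau>"
    and z: "\<And>\<tau>. \<not> (\<alpha> \<le> -\<tau> \<and> -\<tau> \<le> \<beta>) \<Longrightarrow> u \<tau> = 0"
    and nz': "AE \<tau> in lborel. \<alpha>' \<le> -\<tau> \<and> -\<tau> \<le> \<beta>' \<longrightarrow> u' \<tau> \<noteq> 0"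
    and ab': "\<alpha>' < \<beta>'"
  shows "\<beta>' \<le> \<beta>" "\<alpha> \<le> \<alpha>'"
proof -
  show "\<beta>' \<le> \<beta>"
  proof (rule ccontr)
    assume "\<not> \<beta>' \<le> \<beta>"
    define s where "s = max \<beta> \<alpha>'"
    have "AE \<tau> in lborel. \<tau> \<notin> {-\<beta>'<..<-s}"
      using eq nz'
    proof eventually_elim
      case (elim \<tau>)
      show ?case
      proof
        assume "\<tau> \<in> {-\<beta>'<..<-s}"
        hence "\<alpha>' \<le> -\<tau>" "-\<tau> \<le> \<beta>'" "\<beta> < -\<tau>" by (auto simp: s_def)
        thus False using elim z[of \<tau>] by auto
      qed
    qed
    hence "-s \<le> -\<beta>'" by (rule ae_not_interval)
    thus False using \<open>\<not> \<beta>' \<le> \<beta>\<close> ab' by (simp add: s_def)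
  qed
  show "\<alpha> \<le> \<alpha>'"
  proof (rule ccontr)
    assume "\<not> \<alpha> \<le> \<alpha>'"
    define s where "s = min \<alpha> \<beta>'"
    have "AE \<tau> in lborel. \<tau> \<notin> {-s<..<-\<alpha>'}"
      using eq nz'
    proof eventually_elim
      case (elim \<tau>)
      show ?case
      proof
        assume "\<tau> \<in> {-s<..<-\<alpha>'}"
        hence "\<alpha>' \<le> -\<tau>" "-\<tau> \<le> \<beta>'" "-\<tau> < \<alpha>" by (auto simp: s_def)
        thus False using elim z[of \<tau>] by auto
      qed
    qed
    hence "-\<alpha>' \<le> -s" by (rule ae_not_interval)
    thus False using \<open>\<not> \<alpha> \<le> \<alpha>'\<close> ab' by (simp add: s_def)
  qed
qed

lemma main_generic:
  fixes D D' :: "'a::euclidean_space set"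
    and f f' :: "'a \<Rightarrow> complex"
    and g :: "real \<Rightarrow> complex"
    and \<theta> :: 'a
    and a b :: real
  assumes card: "CARD('n::{finite,wellorder}) = DIM('a)"
    and I: "a < b"
    and g_nz: "\<forall>k\<in>{a<..<b}. g k \<noteq> 0"
    and theta: "norm \<theta> = 1"
    and adm: "admissible_pair D f \<theta>"
    and adm': "admissible_pair D' f' \<theta>"
    and data: "\<forall>k\<in>{a<..<b}. far_field D f g \<theta> k = far_field D' f' g \<theta> k"
  shows "strip_hull D \<theta> = strip_hull D' \<theta>"
proof -
  define \<alpha> where "\<alpha> = (INF z\<in>D. z \<bullet> \<theta>)"
  define \<beta> where "\<beta> = (SUP z\<in>D. z \<bullet> \<theta>)"
  define \<alpha>' where "\<alpha>' = (INF z\<in>D'. z \<bullet> \<theta>)"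
  define \<beta>' where "\<beta>' = (SUP z\<in>D'. z \<bullet> \<theta>)"
  obtain u where ui: "integrable lborel u"
    and uz: "\<And>\<tau>. \<not> (\<alpha> \<le> -\<tau> \<and> -\<tau> \<le> \<beta>) \<Longrightarrow> u \<tau> = 0"
    and unz: "AE \<tau> in lborel. (\<alpha> \<le> -\<tau> \<and> -\<tau> \<le> \<beta>) \<longrightarrow> u \<tau> \<noteq> 0"
    and uff: "\<And>k. far_field D f g \<theta> k = g k * (\<integral>\<tau>. exp (\<i> * complex_of_real (k*\<tau>)) * u \<tau> \<partial>lborel)"
    and ab: "\<alpha> < \<beta>"
    using admissible_analysis[OF theta card adm, of g] unfolding \<alpha>_def \<beta>_def by blast
  obtain u' where ui': "integrable lborel u'"
    and uz': "\<And>\<tau>. \<not> (\<alpha>' \<le> -\<tau> \<and> -\<tau> \<le> \<beta>') \<Longrightarrow> u' \<tau> = 0"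
    and unz': "AE \<tau> in lborel. (\<alpha>' \<le> -\<tau> \<and> -\<tau> \<le> \<beta>') \<longrightarrow> u' \<tau> \<noteq> 0"
    and uff': "\<And>k. far_field D' f' g \<theta> k = g k * (\<integral>\<tau>. exp (\<i> * complex_of_real (k*\<tau>)) * u' \<tau> \<partial>lborel)"
    and ab': "\<alpha>' < \<beta>'"
    using admissible_analysis[OF theta card adm', of g] unfolding \<alpha>'_def \<beta>'_def by blast
  define w where "w \<tau> = u \<tau> - u' \<tau>" for \<tau>
  have wi: "integrable lborel w" unfolding w_def using ui ui' by (rule Bochner_Integration.integrable_diff)
  define R where "R = max (max \<bar>\<alpha>\<bar> \<bar>\<beta>\<bar>) (max \<bar>\<alpha>'\<bar> \<bar>\<beta>'\<bar>)"
  have R: "R \<ge> 0" by (simp add: R_def)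
  have supp: "w \<tau> = 0" if "\<bar>\<tau>\<bar> > R" for \<tau>
  proof -
    have "\<not> (\<alpha> \<le> -\<tau> \<and> -\<tau> \<le> \<beta>)" "\<not> (\<alpha>' \<le> -\<tau> \<and> -\<tau> \<le> \<beta>')"
      using that by (auto simp: R_def abs_if split: if_splits)
    thus ?thesis using uz uz' by (simp add: w_def)
  qed
  have Z: "(\<integral>\<tau>. exp (\<i> * complex_of_real (k*\<tau>)) * w \<tau> \<partial>lborel) = 0" if k: "k \<in> {a<..<b}" for k
  proof -
    have "g k * (\<integral>\<tau>. exp (\<i> * complex_of_real (k*\<tau>)) * u \<tau> \<partial>lborel) = g k * (\<integral>\<tau>. exp (\<i> * complex_of_real (k*\<tau>)) * u' \<tau> \<partial>lborel)"
      using data k uff uff' by metis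
    hence eq: "(\<integral>\<tau>. exp (\<i> * complex_of_real (k*\<tau>)) * u \<tau> \<partial>lborel) = (\<integral>\<tau>. exp (\<i> * complex_of_real (k*\<tau>)) * u' \<tau> \<partial>lborel)"
      using g_nz k by simp
    have "(\<integral>\<tau>. exp (\<i> * complex_of_real (k*\<tau>)) * w \<tau> \<partial>lborel)
        = (\<integral>\<tau>. exp (\<i> * complex_of_real (k*\<tau>)) * u \<tau> - exp (\<i> * complex_of_real (k*\<tau>)) * u' \<tau> \<partial>lborel)"
      by (simp add: w_def algebra_simps)
    also have "\<dots> = (\<integral>\<tau>. exp (\<i> * complex_of_real (k*\<tau>)) * u \<tau> \<partial>lborel) - (\<integral>\<tau>. exp (\<i> * complex_of_real (k*\<tau>)) * u' \<tau> \<partial>lborel)"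
      by (rule Bochner_Integration.integral_diff[OF integrable_exp_mult[OF ui] integrable_exp_mult[OF ui']])
    also have "\<dots> = 0" using eq by simp
    finally show ?thesis .
  qed
  have "AE \<tau> in lborel. w \<tau> = 0" by (rule fourier_unique[OF wi supp R I Z])
  hence eq: "AE \<tau> in lborel. u \<tau> = u' \<tau>" by eventually_elim (simp add: w_def)
  hence eq': "AE \<tau> in lborel. u' \<tau> = u \<tau>" by eventually_elim simp
  have 1: "\<beta>' \<le> \<beta>" "\<alpha> \<le> \<alpha>'" using strip_endpoint[OF eq uz unz' ab'] by auto
  have 2: "\<beta> \<le> \<beta>'" "\<alpha>' \<le> \<alpha>" using strip_endpoint[OF eq' uz' unz ab] by auto
  have "\<alpha> = \<alpha>'" "\<beta> = \<beta>'" using 1 2 by auto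
  thus ?thesis unfolding strip_hull_def \<alpha>_def \<beta>_def \<alpha>'_def \<beta>'_def by simp
qed


theorem theorem2p2:
  fixes D D' :: "'a::euclidean_space set"
    and f f' :: "'a \<Rightarrow> complex"
    and g :: "real \<Rightarrow> complex"
    and \<theta> :: 'a
    and kmax a b :: real
  assumes dim: "DIM('a) = 2 \<or> DIM('a) = 3"
    and kmax: "kmax > 0"
    and g_cont: "continuous_on {0<..<kmax} g"
    and I: "a < b" "{a<..<b} \<subseteq> {0<..<kmax}"
    and g_nz: "\<forall>k\<in>{a<..<b}. g k \<noteq> 0"
    and theta: "norm \<theta> = 1"
    and adm: "admissible_pair D f \<theta>"
    and adm': "admissible_pair D' f' \<theta>"
    and data: "\<forall>k\<in>{a<..<b}. far_field D f g \<theta> k = far_field D' f' g \<theta> k"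
  shows "strip_hull D \<theta> = strip_hull D' \<theta>"
  using dim
proof
  assume "DIM('a) = 2"
  hence c: "CARD(2) = DIM('a)" by simp
  show ?thesis by (rule main_generic[OF c I(1) g_nz theta adm adm' data])
next
  assume "DIM('a) = 3"
  hence c: "CARD(3) = DIM('a)" by simp
  show ?thesis by (rule main_generic[OF c I(1) g_nz theta adm adm' data])
qed

end
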